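(* Let $\mathsf C$ be a triangulated category and let $A\to B\to C\to\Sigma A$ and $A'\to B'\to C'\to\Sigma A'$ be two homotopy equivalent exact triangles. Then $A\oplus B'\oplus C\cong A'\oplus B\oplus C'$.
   Context: An exact triangle $A\to B\to C\to\Sigma A$ induces a presentation of a functor $F\colon\mathsf C^{\mathrm{op}}\to\mathrm{Ab}$ if there is an exact sequence $\mathrm{Hom}(-,B)\to\mathrm{Hom}(-,C)\to F\to0$ in which the first map is induced by $B\to C$. Two exact triangles are homotopy equivalent if they induce presentations of the same functor. *)

theory Defs
  imports "HOL-Algebra.Group"
begin

text \<open>A category with hom-sets, carrying an additive structure on hom-sets,
  a shift functor and a class of distinguished (exact) triangles.
  cmp C g f denotes the composite g o f.\<close>

record ('o, 'm) tcat =
  Ob  :: "'o set"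
  Hom :: "'o \<Rightarrow> 'o \<Rightarrow> 'm set"
  cmp :: "'m \<Rightarrow> 'm \<Rightarrow> 'm"
  idm :: "'o \<Rightarrow> 'm"
  madd :: "'m \<Rightarrow> 'm \<Rightarrow> 'm"
  zer :: "'o \<Rightarrow> 'o \<Rightarrow> 'm"
  shO :: "'o \<Rightarrow> 'o"
  shM :: "'m \<Rightarrow> 'm"
  tri :: "('o \<times> 'o \<times> 'o \<times> 'm \<times> 'm \<times> 'm) set"

definition category :: "('o, 'm, 'e) tcat_scheme \<Rightarrow> bool" where
  "category C \<longleftrightarrow>
     (\<forall>X Y. Hom C X Y \<noteq> {} \<longrightarrow> X \<in> Ob C \<and> Y \<in> Ob C) \<and>
     (\<forall>X Y X' Y'. Hom C X Y \<inter> Hom C X' Y' \<noteq> {} \<longrightarrow> X = X' \<and> Y = Y') \<and>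
     (\<forall>X \<in> Ob C. idm C X \<in> Hom C X X) \<and>
     (\<forall>X Y Z f g. f \<in> Hom C X Y \<longrightarrow> g \<in> Hom C Y Z \<longrightarrow> cmp C g f \<in> Hom C X Z) \<and>
     (\<forall>X Y Z W f g h. f \<in> Hom C X Y \<longrightarrow> g \<in> Hom C Y Z \<longrightarrow> h \<in> Hom C Z W \<longrightarrow>
        cmp C h (cmp C g f) = cmp C (cmp C h g) f) \<and>
     (\<forall>X Y f. f \<in> Hom C X Y \<longrightarrow> cmp C f (idm C X) = f \<and> cmp C (idm C Y) f = f)"

definition homgrp :: "('o, 'm, 'e) tcat_scheme \<Rightarrow> 'o \<Rightarrow> 'o \<Rightarrow> 'm monoid" where
  "homgrp C X Y = \<lparr>carrier = Hom C X Y, mult = madd C, one = zer C X Y\<rparr>"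

definition preadditive :: "('o, 'm, 'e) tcat_scheme \<Rightarrow> bool" where
  "preadditive C \<longleftrightarrow> category C \<and>
     (\<forall>X \<in> Ob C. \<forall>Y \<in> Ob C. comm_group (homgrp C X Y)) \<and>
     (\<forall>X Y Z f f' g. f \<in> Hom C X Y \<longrightarrow> f' \<in> Hom C X Y \<longrightarrow> g \<in> Hom C Y Z \<longrightarrow>
        cmp C g (madd C f f') = madd C (cmp C g f) (cmp C g f')) \<and>
     (\<forall>X Y Z f g g'. f \<in> Hom C X Y \<longrightarrow> g \<in> Hom C Y Z \<longrightarrow> g' \<in> Hom C Y Z \<longrightarrow>
        cmp C (madd C g g') f = madd C (cmp C g f) (cmp C g' f))"

definition zero_object :: "('o, 'm, 'e) tcat_scheme \<Rightarrow> 'o \<Rightarrow> bool" where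
  "zero_object C Z \<longleftrightarrow> Z \<in> Ob C \<and>
     (\<forall>X \<in> Ob C. Hom C Z X = {zer C Z X} \<and> Hom C X Z = {zer C X Z})"

definition biproduct :: "('o, 'm, 'e) tcat_scheme \<Rightarrow> 'o \<Rightarrow> 'o \<Rightarrow> 'o \<Rightarrow> 'm \<Rightarrow> 'm \<Rightarrow> 'm \<Rightarrow> 'm \<Rightarrow> bool" where
  "biproduct C X Y P i1 i2 p1 p2 \<longleftrightarrow> P \<in> Ob C \<and>
     i1 \<in> Hom C X P \<and> i2 \<in> Hom C Y P \<and> p1 \<in> Hom C P X \<and> p2 \<in> Hom C P Y \<and>
     cmp C p1 i1 = idm C X \<and> cmp C p2 i2 = idm C Y \<and>
     cmp C p1 i2 = zer C Y X \<and> cmp C p2 i1 = zer C X Y \<and>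
     madd C (cmp C i1 p1) (cmp C i2 p2) = idm C P"

definition additive :: "('o, 'm, 'e) tcat_scheme \<Rightarrow> bool" where
  "additive C \<longleftrightarrow> preadditive C \<and> (\<exists>Z. zero_object C Z) \<and>
     (\<forall>X \<in> Ob C. \<forall>Y \<in> Ob C. \<exists>P i1 i2 p1 p2. biproduct C X Y P i1 i2 p1 p2)"

definition is_biproduct3 :: "('o, 'm, 'e) tcat_scheme \<Rightarrow> 'o \<Rightarrow> 'o \<Rightarrow> 'o \<Rightarrow> 'o \<Rightarrow> bool" where
  "is_biproduct3 C X1 X2 X3 D \<longleftrightarrow> D \<in> Ob C \<and>
     (\<exists>i1 i2 i3 p1 p2 p3.
        i1 \<in> Hom C X1 D \<and> i2 \<in> Hom C X2 D \<and> i3 \<in> Hom C X3 D \<and>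
        p1 \<in> Hom C D X1 \<and> p2 \<in> Hom C D X2 \<and> p3 \<in> Hom C D X3 \<and>
        cmp C p1 i1 = idm C X1 \<and> cmp C p2 i2 = idm C X2 \<and> cmp C p3 i3 = idm C X3 \<and>
        cmp C p1 i2 = zer C X2 X1 \<and> cmp C p1 i3 = zer C X3 X1 \<and>
        cmp C p2 i1 = zer C X1 X2 \<and> cmp C p2 i3 = zer C X3 X2 \<and>
        cmp C p3 i1 = zer C X1 X3 \<and> cmp C p3 i2 = zer C X2 X3 \<and>
        madd C (madd C (cmp C i1 p1) (cmp C i2 p2)) (cmp C i3 p3) = idm C D)"

definition iso_mor :: "('o, 'm, 'e) tcat_scheme \<Rightarrow> 'o \<Rightarrow> 'o \<Rightarrow> 'm \<Rightarrow> bool" where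
  "iso_mor C X Y f \<longleftrightarrow> f \<in> Hom C X Y \<and>
     (\<exists>g \<in> Hom C Y X. cmp C g f = idm C X \<and> cmp C f g = idm C Y)"

definition isomorphic :: "('o, 'm, 'e) tcat_scheme \<Rightarrow> 'o \<Rightarrow> 'o \<Rightarrow> bool" where
  "isomorphic C X Y \<longleftrightarrow> (\<exists>f. iso_mor C X Y f)"

definition additive_shift :: "('o, 'm, 'e) tcat_scheme \<Rightarrow> bool" where
  "additive_shift C \<longleftrightarrow>
     (\<forall>X \<in> Ob C. shO C X \<in> Ob C) \<and>
     (\<forall>X Y f. f \<in> Hom C X Y \<longrightarrow> shM C f \<in> Hom C (shO C X) (shO C Y)) \<and>
     (\<forall>X \<in> Ob C. shM C (idm C X) = idm C (shO C X)) \<and>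
     (\<forall>X Y Z f g. f \<in> Hom C X Y \<longrightarrow> g \<in> Hom C Y Z \<longrightarrow>
        shM C (cmp C g f) = cmp C (shM C g) (shM C f)) \<and>
     (\<forall>X Y f f'. f \<in> Hom C X Y \<longrightarrow> f' \<in> Hom C X Y \<longrightarrow>
        shM C (madd C f f') = madd C (shM C f) (shM C f')) \<and>
     (\<forall>X \<in> Ob C. \<forall>Y \<in> Ob C. bij_betw (shM C) (Hom C X Y) (Hom C (shO C X) (shO C Y))) \<and>
     (\<forall>Y \<in> Ob C. \<exists>X \<in> Ob C. isomorphic C Y (shO C X))"

definition is_triangle :: "('o, 'm, 'e) tcat_scheme \<Rightarrow> 'o \<times> 'o \<times> 'o \<times> 'm \<times> 'm \<times> 'm \<Rightarrow> bool" where
  "is_triangle C T = (case T of (A, B, D, u, v, w) \<Rightarrow>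
     A \<in> Ob C \<and> B \<in> Ob C \<and> D \<in> Ob C \<and>
     u \<in> Hom C A B \<and> v \<in> Hom C B D \<and> w \<in> Hom C D (shO C A))"

definition tri_morphism :: "('o, 'm, 'e) tcat_scheme \<Rightarrow> 'o \<times> 'o \<times> 'o \<times> 'm \<times> 'm \<times> 'm \<Rightarrow>
    'o \<times> 'o \<times> 'o \<times> 'm \<times> 'm \<times> 'm \<Rightarrow> 'm \<Rightarrow> 'm \<Rightarrow> 'm \<Rightarrow> bool" where
  "tri_morphism C T T' a b c = (case T of (A, B, D, u, v, w) \<Rightarrow> case T' of (A', B', D', u', v', w') \<Rightarrow>
     a \<in> Hom C A A' \<and> b \<in> Hom C B B' \<and> c \<in> Hom C D D' \<and>
     cmp C b u = cmp C u' a \<and> cmp C c v = cmp C v' b \<and> cmp C (shM C a) w = cmp C w' c)"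

definition rotate :: "('o, 'm, 'e) tcat_scheme \<Rightarrow> 'o \<times> 'o \<times> 'o \<times> 'm \<times> 'm \<times> 'm \<Rightarrow>
    'o \<times> 'o \<times> 'o \<times> 'm \<times> 'm \<times> 'm" where
  "rotate C T = (case T of (A, B, D, u, v, w) \<Rightarrow>
     (B, D, shO C A, v, w, inv\<^bsub>homgrp C (shO C A) (shO C B)\<^esub> (shM C u)))"

definition triangulated :: "('o, 'm, 'e) tcat_scheme \<Rightarrow> bool" where
  "triangulated C \<longleftrightarrow> additive C \<and> additive_shift C \<and>
     (\<forall>T \<in> tri C. is_triangle C T) \<and>
     \<comment> \<open>TR1: closure under isomorphism of triangles\<close>
     (\<forall>T T' a b c. T \<in> tri C \<longrightarrow> is_triangle C T' \<longrightarrow> tri_morphism C T T' a b c \<longrightarrow>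
        (case T of (A, B, D, _) \<Rightarrow> case T' of (A', B', D', _) \<Rightarrow>
           iso_mor C A A' a \<and> iso_mor C B B' b \<and> iso_mor C D D' c) \<longrightarrow> T' \<in> tri C) \<and>
     \<comment> \<open>TR1: X \<rightarrow> X \<rightarrow> 0 \<rightarrow> \<Sigma>X is exact\<close>
     (\<forall>X \<in> Ob C. \<forall>Z. zero_object C Z \<longrightarrow>
        (X, X, Z, idm C X, zer C X Z, zer C Z (shO C X)) \<in> tri C) \<and>
     \<comment> \<open>TR1: every morphism embeds in an exact triangle\<close>
     (\<forall>X Y f. f \<in> Hom C X Y \<longrightarrow> (\<exists>D v w. (X, Y, D, f, v, w) \<in> tri C)) \<and>
     \<comment> \<open>TR2: rotation\<close>
     (\<forall>T. is_triangle C T \<longrightarrow> (T \<in> tri C \<longleftrightarrow> rotate C T \<in> tri C)) \<and>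
     \<comment> \<open>TR3: completion of morphisms\<close>
     (\<forall>A B D u v w A' B' D' u' v' w' a b.
        (A, B, D, u, v, w) \<in> tri C \<longrightarrow> (A', B', D', u', v', w') \<in> tri C \<longrightarrow>
        a \<in> Hom C A A' \<longrightarrow> b \<in> Hom C B B' \<longrightarrow> cmp C b u = cmp C u' a \<longrightarrow>
        (\<exists>c. tri_morphism C (A, B, D, u, v, w) (A', B', D', u', v', w') a b c)) \<and>
     \<comment> \<open>TR4: octahedral axiom\<close>
     (\<forall>X Y Z f g Q1 p1 d1 Q2 p2 d2 Q3 p3 d3.
        f \<in> Hom C X Y \<longrightarrow> g \<in> Hom C Y Z \<longrightarrow>
        (X, Y, Q1, f, p1, d1) \<in> tri C \<longrightarrow>
        (X, Z, Q2, cmp C g f, p2, d2) \<in> tri C \<longrightarrow>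
        (Y, Z, Q3, g, p3, d3) \<in> tri C \<longrightarrow>
        (\<exists>a b. a \<in> Hom C Q1 Q2 \<and> b \<in> Hom C Q2 Q3 \<and>
           (Q1, Q2, Q3, a, b, cmp C (shM C p1) d3) \<in> tri C \<and>
           cmp C a p1 = cmp C p2 g \<and> cmp C d2 a = d1 \<and>
           cmp C b p2 = p3 \<and> cmp C (shM C f) d2 = cmp C d3 b))"

definition ab_functor :: "('o, 'm, 'e) tcat_scheme \<Rightarrow> ('o \<Rightarrow> 'x monoid) \<Rightarrow> ('m \<Rightarrow> 'x \<Rightarrow> 'x) \<Rightarrow> bool" where
  "ab_functor C FO FM \<longleftrightarrow>
     (\<forall>X \<in> Ob C. comm_group (FO X)) \<and>
     (\<forall>X Y f. f \<in> Hom C X Y \<longrightarrow> FM f \<in> hom (FO Y) (FO X)) \<and>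
     (\<forall>X \<in> Ob C. \<forall>x \<in> carrier (FO X). FM (idm C X) x = x) \<and>
     (\<forall>X Y Z f g. f \<in> Hom C X Y \<longrightarrow> g \<in> Hom C Y Z \<longrightarrow>
        (\<forall>x \<in> carrier (FO Z). FM (cmp C g f) x = FM f (FM g x)))"

text \<open>The triangle (A,B,C0,u,v,w) induces a presentation of F via \<pi>:
  Hom(-,B) \<rightarrow> Hom(-,C0) \<rightarrow> F \<rightarrow> 0 is exact, the first map being v \<circ> -,
  and \<pi> : Hom(-,C0) \<rightarrow> F a natural transformation.\<close>
definition presents :: "('o, 'm, 'e) tcat_scheme \<Rightarrow> 'o \<times> 'o \<times> 'o \<times> 'm \<times> 'm \<times> 'm \<Rightarrow>
    ('o \<Rightarrow> 'x monoid) \<Rightarrow> ('m \<Rightarrow> 'x \<Rightarrow> 'x) \<Rightarrow> ('o \<Rightarrow> 'm \<Rightarrow> 'x) \<Rightarrow> bool" where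
  "presents C T FO FM \<pi> \<longleftrightarrow> ab_functor C FO FM \<and>
     (case T of (A, B, D, u, v, w) \<Rightarrow>
       (\<forall>X \<in> Ob C.
          \<pi> X \<in> hom (homgrp C X D) (FO X) \<and>
          \<pi> X ` Hom C X D = carrier (FO X) \<and>
          {h \<in> Hom C X D. \<pi> X h = \<one>\<^bsub>FO X\<^esub>} = (\<lambda>k. cmp C v k) ` Hom C X B) \<and>
       (\<forall>X Y f h. f \<in> Hom C X Y \<longrightarrow> h \<in> Hom C Y D \<longrightarrow>
          \<pi> X (cmp C h f) = FM f (\<pi> Y h)))"

end

theory Submission
  imports Defs "HOL-Algebra.Ring"
begin



locale TC =
  fixes C :: "('o, 'm, 'e) tcat_scheme"
  assumes trC: "triangulated C"
begin


definition neg :: "'o \<Rightarrow> 'o \<Rightarrow> 'm \<Rightarrow> 'm" where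
  "neg X Y f = inv\<^bsub>homgrp C X Y\<^esub> f"

lemma addC: "additive C" using trC by (simp add: triangulated_def)
lemma preC: "preadditive C" using addC by (simp add: additive_def)
lemma catC: "category C" using preC by (simp add: preadditive_def)

lemma hom_ob: "f \<in> Hom C X Y \<Longrightarrow> X \<in> Ob C \<and> Y \<in> Ob C"
proof -
  assume "f \<in> Hom C X Y" hence "Hom C X Y \<noteq> {}" by blast
  moreover have "\<forall>X Y. Hom C X Y \<noteq> {} \<longrightarrow> X \<in> Ob C \<and> Y \<in> Ob C"
    using catC unfolding category_def by (elim conjE) assumption
  ultimately show ?thesis by blast
qed
lemma hom_ob1: "f \<in> Hom C X Y \<Longrightarrow> X \<in> Ob C" using hom_ob by blast
lemma hom_ob2: "f \<in> Hom C X Y \<Longrightarrow> Y \<in> Ob C" using hom_ob by blast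
lemma hom_uniq: "f \<in> Hom C X Y \<Longrightarrow> f \<in> Hom C X' Y' \<Longrightarrow> X = X' \<and> Y = Y'"
proof -
  assume "f \<in> Hom C X Y" "f \<in> Hom C X' Y'" hence "Hom C X Y \<inter> Hom C X' Y' \<noteq> {}" by blast
  moreover have "\<forall>X Y X' Y'. Hom C X Y \<inter> Hom C X' Y' \<noteq> {} \<longrightarrow> X = X' \<and> Y = Y'"
    using catC unfolding category_def by (elim conjE) assumption
  ultimately show ?thesis by blast
qed
lemma id_hom: "X \<in> Ob C \<Longrightarrow> idm C X \<in> Hom C X X"
  using catC unfolding category_def by blast
lemma comp_hom: "f \<in> Hom C X Y \<Longrightarrow> g \<in> Hom C Y Z \<Longrightarrow> cmp C g f \<in> Hom C X Z"
  using catC unfolding category_def by blast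
lemma assoc: "f \<in> Hom C X Y \<Longrightarrow> g \<in> Hom C Y Z \<Longrightarrow> h \<in> Hom C Z W \<Longrightarrow>
   cmp C (cmp C h g) f = cmp C h (cmp C g f)"
  using catC unfolding category_def by metis
lemma id_r: "f \<in> Hom C X Y \<Longrightarrow> cmp C f (idm C X) = f"
  using catC unfolding category_def by blast
lemma id_l: "f \<in> Hom C X Y \<Longrightarrow> cmp C (idm C Y) f = f"
  using catC unfolding category_def by blast

lemma grp: "X \<in> Ob C \<Longrightarrow> Y \<in> Ob C \<Longrightarrow> comm_group (homgrp C X Y)"
  using preC unfolding preadditive_def by blast

lemma distr_l: "f \<in> Hom C X Y \<Longrightarrow> f' \<in> Hom C X Y \<Longrightarrow> g \<in> Hom C Y Z \<Longrightarrow>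
        cmp C g (madd C f f') = madd C (cmp C g f) (cmp C g f')"
  using preC unfolding preadditive_def by blast
lemma distr_r: "f \<in> Hom C X Y \<Longrightarrow> g \<in> Hom C Y Z \<Longrightarrow> g' \<in> Hom C Y Z \<Longrightarrow>
        cmp C (madd C g g') f = madd C (cmp C g f) (cmp C g' f)"
  using preC unfolding preadditive_def by blast

lemma add_hom: "f \<in> Hom C X Y \<Longrightarrow> g \<in> Hom C X Y \<Longrightarrow> madd C f g \<in> Hom C X Y"
proof -
  assume a: "f \<in> Hom C X Y" "g \<in> Hom C X Y"
  then interpret comm_group "homgrp C X Y" using grp hom_ob by blast
  show ?thesis using a m_closed[of f g] by (simp add: homgrp_def)
qed

lemma zer_hom: "X \<in> Ob C \<Longrightarrow> Y \<in> Ob C \<Longrightarrow> zer C X Y \<in> Hom C X Y"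
proof -
  assume a: "X \<in> Ob C" "Y \<in> Ob C"
  then interpret comm_group "homgrp C X Y" using grp by blast
  show ?thesis using one_closed by (simp add: homgrp_def)
qed

lemma add_assoc: "f \<in> Hom C X Y \<Longrightarrow> g \<in> Hom C X Y \<Longrightarrow> h \<in> Hom C X Y \<Longrightarrow>
   madd C (madd C f g) h = madd C f (madd C g h)"
proof -
  assume a: "f \<in> Hom C X Y" "g \<in> Hom C X Y" "h \<in> Hom C X Y"
  then interpret comm_group "homgrp C X Y" using grp hom_ob by blast
  show ?thesis using a m_assoc[of f g h] by (simp add: homgrp_def)
qed

lemma add_comm: "f \<in> Hom C X Y \<Longrightarrow> g \<in> Hom C X Y \<Longrightarrow> madd C f g = madd C g f"
proof -
  assume a: "f \<in> Hom C X Y" "g \<in> Hom C X Y"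
  then interpret comm_group "homgrp C X Y" using grp hom_ob by blast
  show ?thesis using a m_comm[of f g] by (simp add: homgrp_def)
qed

lemma zer_add: "f \<in> Hom C X Y \<Longrightarrow> madd C (zer C X Y) f = f"
proof -
  assume a: "f \<in> Hom C X Y"
  then interpret comm_group "homgrp C X Y" using grp hom_ob by blast
  show ?thesis using a l_one[of f] by (simp add: homgrp_def)
qed

lemma add_zer: "f \<in> Hom C X Y \<Longrightarrow> madd C f (zer C X Y) = f"
proof -
  assume a: "f \<in> Hom C X Y"
  then interpret comm_group "homgrp C X Y" using grp hom_ob by blast
  show ?thesis using a r_one[of f] by (simp add: homgrp_def)
qed

lemma neg_hom: "f \<in> Hom C X Y \<Longrightarrow> neg X Y f \<in> Hom C X Y"
proof -
  assume a: "f \<in> Hom C X Y"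
  then interpret comm_group "homgrp C X Y" using grp hom_ob by blast
  show ?thesis using a inv_closed[of f] by (simp add: homgrp_def neg_def)
qed

lemma add_neg: "f \<in> Hom C X Y \<Longrightarrow> madd C f (neg X Y f) = zer C X Y"
proof -
  assume a: "f \<in> Hom C X Y"
  then interpret comm_group "homgrp C X Y" using grp hom_ob by blast
  show ?thesis using a r_inv[of f] by (simp add: homgrp_def neg_def)
qed

lemma neg_add: "f \<in> Hom C X Y \<Longrightarrow> madd C (neg X Y f) f = zer C X Y"
  using add_neg add_comm neg_hom by metis

lemma add_cancel_l: "f \<in> Hom C X Y \<Longrightarrow> g \<in> Hom C X Y \<Longrightarrow> h \<in> Hom C X Y \<Longrightarrow>
   madd C f g = madd C f h \<Longrightarrow> g = h"
proof -
  assume a: "f \<in> Hom C X Y" "g \<in> Hom C X Y" "h \<in> Hom C X Y" "madd C f g = madd C f h"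
  then interpret comm_group "homgrp C X Y" using grp hom_ob by blast
  show ?thesis using a Units_l_cancel[of f g h] Units_eq by (simp add: homgrp_def)
qed

lemma sub_zero: "f \<in> Hom C X Y \<Longrightarrow> g \<in> Hom C X Y \<Longrightarrow> madd C f (neg X Y g) = zer C X Y \<Longrightarrow> f = g"
  by (metis add_assoc add_zer neg_add neg_hom zer_add)

lemma neg_neg_eq: "f \<in> Hom C X Y \<Longrightarrow> g \<in> Hom C X Y \<Longrightarrow> neg X Y f = neg X Y g \<Longrightarrow> f = g"
  by (metis add_neg neg_hom sub_zero)

lemma neg_zero_iff: "f \<in> Hom C X Y \<Longrightarrow> neg X Y f = zer C X Y \<Longrightarrow> f = zer C X Y"
  by (metis add_neg add_zer)

lemma comp_zer_r: "g \<in> Hom C Y Z \<Longrightarrow> X \<in> Ob C \<Longrightarrow> cmp C g (zer C X Y) = zer C X Z"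
proof -
  assume a: "g \<in> Hom C Y Z" "X \<in> Ob C"
  have z: "zer C X Y \<in> Hom C X Y" using a hom_ob zer_hom by blast
  have gz: "cmp C g (zer C X Y) \<in> Hom C X Z" using z a comp_hom by blast
  have "cmp C g (zer C X Y) = cmp C g (madd C (zer C X Y) (zer C X Y))" using z zer_add by simp
  also have "\<dots> = madd C (cmp C g (zer C X Y)) (cmp C g (zer C X Y))" using z a distr_l by blast
  finally have e: "madd C (cmp C g (zer C X Y)) (zer C X Z) = madd C (cmp C g (zer C X Y)) (cmp C g (zer C X Y))"
    using gz add_zer by simp
  show ?thesis using add_cancel_l[OF gz _ gz e] zer_hom a hom_ob gz by (metis)
qed

lemma comp_zer_l: "f \<in> Hom C X Y \<Longrightarrow> Z \<in> Ob C \<Longrightarrow> cmp C (zer C Y Z) f = zer C X Z"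
proof -
  assume a: "f \<in> Hom C X Y" "Z \<in> Ob C"
  have z: "zer C Y Z \<in> Hom C Y Z" using a hom_ob zer_hom by blast
  have gz: "cmp C (zer C Y Z) f \<in> Hom C X Z" using z a comp_hom by blast
  have "cmp C (zer C Y Z) f = cmp C (madd C (zer C Y Z) (zer C Y Z)) f" using z zer_add by simp
  also have "\<dots> = madd C (cmp C (zer C Y Z) f) (cmp C (zer C Y Z) f)" using z a distr_r by blast
  finally have e: "madd C (cmp C (zer C Y Z) f) (zer C X Z) = madd C (cmp C (zer C Y Z) f) (cmp C (zer C Y Z) f)"
    using gz add_zer by simp
  show ?thesis using add_cancel_l[OF gz _ gz e] zer_hom a hom_ob gz by (metis)
qed

lemma comp_neg_r: "f \<in> Hom C X Y \<Longrightarrow> g \<in> Hom C Y Z \<Longrightarrow> cmp C g (neg X Y f) = neg X Z (cmp C g f)"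
proof -
  assume a: "f \<in> Hom C X Y" "g \<in> Hom C Y Z"
  have n: "neg X Y f \<in> Hom C X Y" using a neg_hom by blast
  have "madd C (cmp C g f) (cmp C g (neg X Y f)) = cmp C g (zer C X Y)"
    using distr_l[OF a(1) n a(2)] add_neg a by simp
  also have "\<dots> = zer C X Z" using comp_zer_r a hom_ob by blast
  finally have e: "madd C (cmp C g f) (cmp C g (neg X Y f)) = madd C (cmp C g f) (neg X Z (cmp C g f))"
    using add_neg comp_hom a by metis
  show ?thesis using add_cancel_l[OF _ _ _ e] comp_hom a n neg_hom by blast
qed

lemma comp_neg_l: "f \<in> Hom C X Y \<Longrightarrow> g \<in> Hom C Y Z \<Longrightarrow> cmp C (neg Y Z g) f = neg X Z (cmp C g f)"
proof -
  assume a: "f \<in> Hom C X Y" "g \<in> Hom C Y Z"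
  have n: "neg Y Z g \<in> Hom C Y Z" using a neg_hom by blast
  have "madd C (cmp C g f) (cmp C (neg Y Z g) f) = cmp C (zer C Y Z) f"
    using distr_r[OF a(1) a(2) n] add_neg a by simp
  also have "\<dots> = zer C X Z" using comp_zer_l a hom_ob by blast
  finally have e: "madd C (cmp C g f) (cmp C (neg Y Z g) f) = madd C (cmp C g f) (neg X Z (cmp C g f))"
    using add_neg comp_hom a by metis
  show ?thesis using add_cancel_l[OF _ _ _ e] comp_hom a n neg_hom by blast
qed

end


context TC
begin

lemma shC: "additive_shift C" using trC by (simp add: triangulated_def)

lemmas shA = shC[unfolded additive_shift_def]
lemmas shA1 = shA[THEN conjunct1]
lemmas shA2 = shA[THEN conjunct2, THEN conjunct1]
lemmas shA3 = shA[THEN conjunct2, THEN conjunct2, THEN conjunct1]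
lemmas shA4 = shA[THEN conjunct2, THEN conjunct2, THEN conjunct2, THEN conjunct1]
lemmas shA5 = shA[THEN conjunct2, THEN conjunct2, THEN conjunct2, THEN conjunct2, THEN conjunct1]
lemmas shA6 = shA[THEN conjunct2, THEN conjunct2, THEN conjunct2, THEN conjunct2, THEN conjunct2, THEN conjunct1]

lemma sh_ob: "X \<in> Ob C \<Longrightarrow> shO C X \<in> Ob C"
  using shA1 by blast
lemma sh_hom: "f \<in> Hom C X Y \<Longrightarrow> shM C f \<in> Hom C (shO C X) (shO C Y)"
  using shA2 by blast
lemma sh_id: "X \<in> Ob C \<Longrightarrow> shM C (idm C X) = idm C (shO C X)"
  using shA3 by blast
lemma sh_comp: "f \<in> Hom C X Y \<Longrightarrow> g \<in> Hom C Y Z \<Longrightarrow> shM C (cmp C g f) = cmp C (shM C g) (shM C f)"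
  using shA4 by blast
lemma sh_add: "f \<in> Hom C X Y \<Longrightarrow> f' \<in> Hom C X Y \<Longrightarrow> shM C (madd C f f') = madd C (shM C f) (shM C f')"
  using shA5 by blast
lemma sh_bij: "X \<in> Ob C \<Longrightarrow> Y \<in> Ob C \<Longrightarrow> bij_betw (shM C) (Hom C X Y) (Hom C (shO C X) (shO C Y))"
  using shA6 by blast

lemma sh_inj: "f \<in> Hom C X Y \<Longrightarrow> g \<in> Hom C X Y \<Longrightarrow> shM C f = shM C g \<Longrightarrow> f = g"
  using sh_bij hom_ob unfolding bij_betw_def inj_on_def by blast
lemma sh_full: "X \<in> Ob C \<Longrightarrow> Y \<in> Ob C \<Longrightarrow> k \<in> Hom C (shO C X) (shO C Y) \<Longrightarrow> \<exists>f\<in>Hom C X Y. k = shM C f"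
  using sh_bij unfolding bij_betw_def by blast

lemma sh_zer: "X \<in> Ob C \<Longrightarrow> Y \<in> Ob C \<Longrightarrow> shM C (zer C X Y) = zer C (shO C X) (shO C Y)"
proof -
  assume a: "X \<in> Ob C" "Y \<in> Ob C"
  have z: "zer C X Y \<in> Hom C X Y" using a zer_hom by blast
  have s: "shM C (zer C X Y) \<in> Hom C (shO C X) (shO C Y)" using z sh_hom by blast
  have "madd C (shM C (zer C X Y)) (zer C (shO C X) (shO C Y)) = shM C (zer C X Y)" using s add_zer by blast
  also have "\<dots> = shM C (madd C (zer C X Y) (zer C X Y))" using z zer_add by simp
  also have "\<dots> = madd C (shM C (zer C X Y)) (shM C (zer C X Y))" using z sh_add by blast
  finally show ?thesis using add_cancel_l[OF s _ s] zer_hom sh_ob a by metis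
qed

lemma sh_neg: "f \<in> Hom C X Y \<Longrightarrow> shM C (neg X Y f) = neg (shO C X) (shO C Y) (shM C f)"
proof -
  assume a: "f \<in> Hom C X Y"
  have n: "neg X Y f \<in> Hom C X Y" using a neg_hom by blast
  have "madd C (shM C f) (shM C (neg X Y f)) = shM C (zer C X Y)"
    using sh_add[OF a n] add_neg a by simp
  also have "\<dots> = zer C (shO C X) (shO C Y)" using sh_zer a hom_ob by blast
  also have "\<dots> = madd C (shM C f) (neg (shO C X) (shO C Y) (shM C f))" using add_neg sh_hom a by metis
  finally show ?thesis using add_cancel_l sh_hom a n neg_hom by metis
qed

lemmas trA = trC[unfolded triangulated_def]
lemma tri_ax: "\<forall>T \<in> tri C. is_triangle C T"
  by (rule trA[THEN conjunct2, THEN conjunct2, THEN conjunct1])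
lemma zero_ax: "\<forall>X \<in> Ob C. \<forall>Z. zero_object C Z \<longrightarrow>
        (X, X, Z, idm C X, zer C X Z, zer C Z (shO C X)) \<in> tri C"
  by (rule trA[THEN conjunct2, THEN conjunct2, THEN conjunct2, THEN conjunct2, THEN conjunct1])
lemma rot_ax: "\<forall>T. is_triangle C T \<longrightarrow> (T \<in> tri C \<longleftrightarrow> rotate C T \<in> tri C)"
  by (rule trA[THEN conjunct2, THEN conjunct2, THEN conjunct2, THEN conjunct2, THEN conjunct2, THEN conjunct2, THEN conjunct1])
lemma tr3_ax: "\<forall>A B D u v w A' B' D' u' v' w' a b.
        (A, B, D, u, v, w) \<in> tri C \<longrightarrow> (A', B', D', u', v', w') \<in> tri C \<longrightarrow>
        a \<in> Hom C A A' \<longrightarrow> b \<in> Hom C B B' \<longrightarrow> cmp C b u = cmp C u' a \<longrightarrow>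
        (\<exists>c. tri_morphism C (A, B, D, u, v, w) (A', B', D', u', v', w') a b c)"
  by (rule trA[THEN conjunct2, THEN conjunct2, THEN conjunct2, THEN conjunct2, THEN conjunct2, THEN conjunct2, THEN conjunct2, THEN conjunct1])

lemma zobj: "\<exists>Z. zero_object C Z" using addC unfolding additive_def by blast

lemma tri_mem: "(A, B, D, u, v, w) \<in> tri C \<Longrightarrow>
   A \<in> Ob C \<and> B \<in> Ob C \<and> D \<in> Ob C \<and> u \<in> Hom C A B \<and> v \<in> Hom C B D \<and> w \<in> Hom C D (shO C A)"
  using tri_ax unfolding is_triangle_def by fastforce

lemma rot_tri: "(A, B, D, u, v, w) \<in> tri C \<Longrightarrow>
   (B, D, shO C A, v, w, neg (shO C A) (shO C B) (shM C u)) \<in> tri C"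
proof -
  assume a: "(A, B, D, u, v, w) \<in> tri C"
  have "is_triangle C (A, B, D, u, v, w)" using a tri_ax by blast
  hence "rotate C (A, B, D, u, v, w) \<in> tri C" using a rot_ax by blast
  thus ?thesis by (simp add: rotate_def neg_def)
qed

lemma tr3: "(A, B, D, u, v, w) \<in> tri C \<Longrightarrow> (A', B', D', u', v', w') \<in> tri C \<Longrightarrow>
        a \<in> Hom C A A' \<Longrightarrow> b \<in> Hom C B B' \<Longrightarrow> cmp C b u = cmp C u' a \<Longrightarrow>
        \<exists>c \<in> Hom C D D'. cmp C c v = cmp C v' b \<and> cmp C (shM C a) w = cmp C w' c"
proof -
  assume "(A, B, D, u, v, w) \<in> tri C" "(A', B', D', u', v', w') \<in> tri C"
        "a \<in> Hom C A A'" "b \<in> Hom C B B'" "cmp C b u = cmp C u' a"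
  then obtain c where "tri_morphism C (A, B, D, u, v, w) (A', B', D', u', v', w') a b c"
    using tr3_ax by blast
  thus ?thesis unfolding tri_morphism_def by auto
qed

lemma L1: "(A, B, D, u, v, w) \<in> tri C \<Longrightarrow> cmp C v u = zer C A D"
proof -
  assume T: "(A, B, D, u, v, w) \<in> tri C"
  obtain Z where Z: "zero_object C Z" using zobj by blast
  have m: "A \<in> Ob C" "u \<in> Hom C A B" using T tri_mem by blast+
  have T0: "(A, A, Z, idm C A, zer C A Z, zer C Z (shO C A)) \<in> tri C" using zero_ax Z m by blast
  have e: "cmp C u (idm C A) = cmp C u (idm C A)" by simp
  obtain c where c: "c \<in> Hom C Z D" "cmp C c (zer C A Z) = cmp C v u"
    using tr3[OF T0 T id_hom[OF m(1)] m(2) e] by blast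
  thus ?thesis using comp_zer_r[OF c(1) m(1)] by simp
qed

lemma L2: "(A, B, D, u, v, w) \<in> tri C \<Longrightarrow> k \<in> Hom C X B \<Longrightarrow> cmp C v k = zer C X D \<Longrightarrow>
   \<exists>m \<in> Hom C X A. k = cmp C u m"
proof -
  assume T: "(A, B, D, u, v, w) \<in> tri C" and k: "k \<in> Hom C X B" and vk: "cmp C v k = zer C X D"
  obtain Z where Z: "zero_object C Z" using zobj by blast
  have ZO: "Z \<in> Ob C" using Z by (simp add: zero_object_def)
  have m: "A \<in> Ob C" "B \<in> Ob C" "D \<in> Ob C" "u \<in> Hom C A B" "v \<in> Hom C B D" using T tri_mem by blast+
  have X: "X \<in> Ob C" using k hom_ob by blast
  have T0: "(X, X, Z, idm C X, zer C X Z, zer C Z (shO C X)) \<in> tri C" using zero_ax Z X by blast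
  have R0: "(X, Z, shO C X, zer C X Z, zer C Z (shO C X), neg (shO C X) (shO C X) (shM C (idm C X))) \<in> tri C"
    using rot_tri[OF T0] .
  have R: "(B, D, shO C A, v, w, neg (shO C A) (shO C B) (shM C u)) \<in> tri C" using rot_tri[OF T] .
  have e: "cmp C (zer C Z D) (zer C X Z) = cmp C v k"
    using vk comp_zer_l[OF zer_hom[OF X ZO] m(3)] by simp
  obtain c where c: "c \<in> Hom C (shO C X) (shO C A)"
     "cmp C (shM C k) (neg (shO C X) (shO C X) (shM C (idm C X))) = cmp C (neg (shO C A) (shO C B) (shM C u)) c"
    using tr3[OF R0 R k zer_hom[OF ZO m(3)] e] by blast
  have sk: "shM C k \<in> Hom C (shO C X) (shO C B)" using k sh_hom by blast
  have su: "shM C u \<in> Hom C (shO C A) (shO C B)" using m sh_hom by blast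
  have "cmp C (shM C k) (neg (shO C X) (shO C X) (shM C (idm C X))) = neg (shO C X) (shO C B) (shM C k)"
    using comp_neg_r[OF id_hom[OF sh_ob[OF X]] sk] id_r[OF sk] sh_id[OF X] by simp
  moreover have "cmp C (neg (shO C A) (shO C B) (shM C u)) c = neg (shO C X) (shO C B) (cmp C (shM C u) c)"
    using comp_neg_l[OF c(1) su] .
  ultimately have "neg (shO C X) (shO C B) (shM C k) = neg (shO C X) (shO C B) (cmp C (shM C u) c)"
    using c(2) by simp
  hence e2: "shM C k = cmp C (shM C u) c" using neg_neg_eq[OF sk comp_hom[OF c(1) su]] by blast
  obtain mm where mm: "mm \<in> Hom C X A" "c = shM C mm" using sh_full[OF X m(1) c(1)] by blast
  have "shM C k = shM C (cmp C u mm)" using e2 mm sh_comp[OF mm(1) m(4)] by simp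
  hence "k = cmp C u mm" using sh_inj[OF k comp_hom[OF mm(1) m(4)]] by blast
  thus ?thesis using mm by blast
qed

end


context TC
begin

lemma neg_zer: "X \<in> Ob C \<Longrightarrow> Y \<in> Ob C \<Longrightarrow> neg X Y (zer C X Y) = zer C X Y"
proof -
  assume a: "X \<in> Ob C" "Y \<in> Ob C"
  have z: "zer C X Y \<in> Hom C X Y" using zer_hom a by blast
  show ?thesis using add_neg[OF z] zer_add[OF neg_hom[OF z]] by simp
qed

lemma grp_eq: "f \<in> Hom C X Y \<Longrightarrow> g \<in> Hom C X Y \<Longrightarrow> z \<in> Hom C X Y \<Longrightarrow> madd C f (neg X Y g) = z \<Longrightarrow> f = madd C g z"
proof -
  assume a: "f \<in> Hom C X Y" "g \<in> Hom C X Y" "z \<in> Hom C X Y" "madd C f (neg X Y g) = z"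
  have n: "neg X Y g \<in> Hom C X Y" using neg_hom a by blast
  have "madd C g z = madd C (madd C f (neg X Y g)) g" using a add_comm add_hom n by metis
  also have "\<dots> = madd C f (madd C (neg X Y g) g)" using add_assoc a n by blast
  also have "\<dots> = f" using neg_add[OF a(2)] add_zer[OF a(1)] by simp
  finally show ?thesis by simp
qed

lemma pres_D: assumes "presents C (A, B, D, u, v, w) FO FM \<pi>"
  shows "ab_functor C FO FM"
   and "\<And>X. X \<in> Ob C \<Longrightarrow> \<pi> X \<in> hom (homgrp C X D) (FO X)"
   and "\<And>X. X \<in> Ob C \<Longrightarrow> \<pi> X ` Hom C X D = carrier (FO X)"
   and "\<And>X. X \<in> Ob C \<Longrightarrow> {h \<in> Hom C X D. \<pi> X h = \<one>\<^bsub>FO X\<^esub>} = (\<lambda>k. cmp C v k) ` Hom C X B"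
   and "\<And>X Y f h. f \<in> Hom C X Y \<Longrightarrow> h \<in> Hom C Y D \<Longrightarrow> \<pi> X (cmp C h f) = FM f (\<pi> Y h)"
  using assms unfolding presents_def by auto

lemma pres_grp: assumes "presents C (A, B, D, u, v, w) FO FM \<pi>" "X \<in> Ob C"
  shows "comm_group (FO X)"
  using pres_D(1)[OF assms(1)] assms(2) unfolding ab_functor_def by blast

lemma pres_add: assumes P: "presents C (A, B, D, u, v, w) FO FM \<pi>" and h: "h \<in> Hom C X D" "h' \<in> Hom C X D"
  shows "\<pi> X (madd C h h') = \<pi> X h \<otimes>\<^bsub>FO X\<^esub> \<pi> X h'"
proof -
  have X: "X \<in> Ob C" using h hom_ob by blast
  have "\<pi> X \<in> hom (homgrp C X D) (FO X)" using pres_D(2)[OF P X] .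
  thus ?thesis using h unfolding hom_def homgrp_def by simp
qed

lemma pres_car: assumes P: "presents C (A, B, D, u, v, w) FO FM \<pi>" and h: "h \<in> Hom C X D"
  shows "\<pi> X h \<in> carrier (FO X)"
proof -
  have X: "X \<in> Ob C" using h hom_ob by blast
  have "\<pi> X \<in> hom (homgrp C X D) (FO X)" using pres_D(2)[OF P X] .
  thus ?thesis using h unfolding hom_def homgrp_def by auto
qed

lemma pres_neg: assumes P: "presents C (A, B, D, u, v, w) FO FM \<pi>" and h: "h \<in> Hom C X D"
  shows "\<pi> X (neg X D h) = inv\<^bsub>FO X\<^esub> (\<pi> X h)"
proof -
  have X: "X \<in> Ob C" "D \<in> Ob C" using h hom_ob by blast+
  interpret G: comm_group "FO X" using pres_grp[OF P X(1)] .
  have n: "neg X D h \<in> Hom C X D" using h neg_hom by blast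
  have "\<pi> X h \<otimes>\<^bsub>FO X\<^esub> \<pi> X (neg X D h) = \<pi> X (zer C X D)"
    using pres_add[OF P h n] add_neg h by simp
  also have "\<pi> X (zer C X D) = \<one>\<^bsub>FO X\<^esub>"
  proof -
    interpret H: comm_group "homgrp C X D" using grp X by blast
    have hh: "group_hom (homgrp C X D) (FO X) (\<pi> X)"
      by (rule group_hom.intro[OF H.group_axioms G.group_axioms]) (simp add: group_hom_axioms_def pres_D(2)[OF P X(1)])
    have "\<pi> X \<one>\<^bsub>homgrp C X D\<^esub> = \<one>\<^bsub>FO X\<^esub>" by (rule group_hom.hom_one[OF hh])
    thus ?thesis by (simp add: homgrp_def)
  qed
  finally have e: "\<pi> X h \<otimes>\<^bsub>FO X\<^esub> \<pi> X (neg X D h) = \<one>\<^bsub>FO X\<^esub>" .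
  show ?thesis using G.inv_equality[of "\<pi> X (neg X D h)" "\<pi> X h"] e pres_car[OF P h] pres_car[OF P n]
    G.m_comm by metis
qed

lemma pres_ker: assumes P: "presents C (A, B, D, u, v, w) FO FM \<pi>" and h: "h \<in> Hom C X D"
  and e: "\<pi> X h = \<one>\<^bsub>FO X\<^esub>" shows "\<exists>k \<in> Hom C X B. h = cmp C v k"
proof -
  have X: "X \<in> Ob C" using h hom_ob by blast
  have "h \<in> {h \<in> Hom C X D. \<pi> X h = \<one>\<^bsub>FO X\<^esub>}" using h e by blast
  thus ?thesis using pres_D(4)[OF P X] by blast
qed

lemma pres_ker2: assumes P: "presents C (A, B, D, u, v, w) FO FM \<pi>" and k: "k \<in> Hom C X B" "X \<in> Ob C"
  shows "\<pi> X (cmp C v k) = \<one>\<^bsub>FO X\<^esub>"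
proof -
  have "cmp C v k \<in> (\<lambda>k. cmp C v k) ` Hom C X B" using k by blast
  thus ?thesis using pres_D(4)[OF P k(2)] by blast
qed

lemma pres_sub_one: assumes P: "presents C (A, B, D, u, v, w) FO FM \<pi>" and h: "h \<in> Hom C X D" "h' \<in> Hom C X D"
  and e: "\<pi> X h = \<pi> X h'" shows "\<pi> X (madd C h (neg X D h')) = \<one>\<^bsub>FO X\<^esub>"
proof -
  have X: "X \<in> Ob C" using h hom_ob by blast
  interpret G: comm_group "FO X" using pres_grp[OF P X] .
  show ?thesis using pres_add[OF P h(1) neg_hom[OF h(2)]] pres_neg[OF P h(2)] e pres_car[OF P h(1)] by simp
qed

lemma c_exists:
  assumes P: "presents C (A, B, D, u, v, w) FO FM \<pi>" and P': "presents C (A', B', D', u', v', w') FO FM \<pi>'"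
    and T: "(A, B, D, u, v, w) \<in> tri C" and T': "(A', B', D', u', v', w') \<in> tri C"
  shows "\<exists>c \<in> Hom C D D'. \<forall>X \<gamma>. \<gamma> \<in> Hom C X D \<longrightarrow> \<pi>' X (cmp C c \<gamma>) = \<pi> X \<gamma>"
proof -
  have DO: "D \<in> Ob C" using T tri_mem by blast
  have "\<pi> D (idm C D) \<in> carrier (FO D)" using pres_car[OF P id_hom[OF DO]] .
  then obtain c where c: "c \<in> Hom C D D'" "\<pi>' D c = \<pi> D (idm C D)" using pres_D(3)[OF P' DO]
    by (metis imageE)
  have "\<forall>X \<gamma>. \<gamma> \<in> Hom C X D \<longrightarrow> \<pi>' X (cmp C c \<gamma>) = \<pi> X \<gamma>"
  proof (intro allI impI)
    fix X \<gamma> assume g: "\<gamma> \<in> Hom C X D"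
    have "\<pi>' X (cmp C c \<gamma>) = FM \<gamma> (\<pi>' D c)" using pres_D(5)[OF P' g c(1)] .
    also have "\<dots> = FM \<gamma> (\<pi> D (idm C D))" using c by simp
    also have "\<dots> = \<pi> X (cmp C (idm C D) \<gamma>)" using pres_D(5)[OF P g id_hom[OF DO]] by simp
    also have "\<dots> = \<pi> X \<gamma>" using id_l[OF g] by simp
    finally show "\<pi>' X (cmp C c \<gamma>) = \<pi> X \<gamma>" .
  qed
  thus ?thesis using c by blast
qed

lemma b_exists:
  assumes P: "presents C (A, B, D, u, v, w) FO FM \<pi>" and P': "presents C (A', B', D', u', v', w') FO FM \<pi>'"
    and T: "(A, B, D, u, v, w) \<in> tri C" and T': "(A', B', D', u', v', w') \<in> tri C"
    and c: "c \<in> Hom C D D'" "\<forall>X \<gamma>. \<gamma> \<in> Hom C X D \<longrightarrow> \<pi>' X (cmp C c \<gamma>) = \<pi> X \<gamma>"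
  shows "\<exists>b \<in> Hom C B B'. cmp C c v = cmp C v' b"
proof -
  have m: "B \<in> Ob C" "v \<in> Hom C B D" using T tri_mem by blast+
  have "\<pi>' B (cmp C c v) = \<pi> B v" using c m by blast
  also have "\<dots> = \<pi> B (cmp C v (idm C B))" using id_r[OF m(2)] by simp
  also have "\<dots> = \<one>\<^bsub>FO B\<^esub>" using pres_ker2[OF P id_hom[OF m(1)] m(1)] .
  finally show ?thesis using pres_ker[OF P' comp_hom[OF m(2) c(1)]] by blast
qed

lemma h_exists:
  assumes P: "presents C (A, B, D, u, v, w) FO FM \<pi>" and P': "presents C (A', B', D', u', v', w') FO FM \<pi>'"
    and T: "(A, B, D, u, v, w) \<in> tri C" and T': "(A', B', D', u', v', w') \<in> tri C"
    and c: "c \<in> Hom C D D'" "\<forall>X \<gamma>. \<gamma> \<in> Hom C X D \<longrightarrow> \<pi>' X (cmp C c \<gamma>) = \<pi> X \<gamma>"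
    and c': "c' \<in> Hom C D' D" "\<forall>X \<gamma>. \<gamma> \<in> Hom C X D' \<longrightarrow> \<pi> X (cmp C c' \<gamma>) = \<pi>' X \<gamma>"
  shows "\<exists>h \<in> Hom C D B. idm C D = madd C (cmp C c' c) (cmp C v h)"
proof -
  have DO: "D \<in> Ob C" using T tri_mem by blast
  have i: "idm C D \<in> Hom C D D" using id_hom[OF DO] .
  have cc: "cmp C c' c \<in> Hom C D D" using comp_hom c c' by blast
  have "\<pi> D (cmp C c' c) = \<pi>' D c" using c' c by blast
  also have "\<dots> = \<pi>' D (cmp C c (idm C D))" using id_r c by simp
  also have "\<dots> = \<pi> D (idm C D)" using c i by blast
  finally have "\<pi> D (madd C (idm C D) (neg D D (cmp C c' c))) = \<one>\<^bsub>FO D\<^esub>"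
    using pres_sub_one[OF P i cc] by simp
  then obtain h where h: "h \<in> Hom C D B" "madd C (idm C D) (neg D D (cmp C c' c)) = cmp C v h"
    using pres_ker[OF P add_hom[OF i neg_hom[OF cc]]] by blast
  have "v \<in> Hom C B D" using T tri_mem by blast
  hence "idm C D = madd C (cmp C c' c) (cmp C v h)" using grp_eq[OF i cc comp_hom[OF h(1)] h(2)] by blast
  thus ?thesis using h by blast
qed

lemma a_exists:
  assumes T: "(A, B, D, u, v, w) \<in> tri C" and T': "(A', B', D', u', v', w') \<in> tri C"
    and b: "b \<in> Hom C B B'" and c: "c \<in> Hom C D D'" and e: "cmp C c v = cmp C v' b"
  shows "\<exists>a \<in> Hom C A A'. cmp C b u = cmp C u' a \<and> cmp C (shM C a) w = cmp C w' c"
proof -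
  have m: "A \<in> Ob C" "B \<in> Ob C" "u \<in> Hom C A B" using T tri_mem by blast+
  have m': "A' \<in> Ob C" "B' \<in> Ob C" "u' \<in> Hom C A' B'" using T' tri_mem by blast+
  obtain x where x: "x \<in> Hom C (shO C A) (shO C A')" "cmp C x w = cmp C w' c"
    "cmp C (shM C b) (neg (shO C A) (shO C B) (shM C u)) = cmp C (neg (shO C A') (shO C B') (shM C u')) x"
    using tr3[OF rot_tri[OF T] rot_tri[OF T'] b c e] by blast
  obtain a where a: "a \<in> Hom C A A'" "x = shM C a" using sh_full[OF m(1) m'(1) x(1)] by blast
  have su: "shM C u \<in> Hom C (shO C A) (shO C B)" using sh_hom m by blast
  have su': "shM C u' \<in> Hom C (shO C A') (shO C B')" using sh_hom m' by blast
  have sb: "shM C b \<in> Hom C (shO C B) (shO C B')" using sh_hom b by blast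
  have "neg (shO C A) (shO C B') (cmp C (shM C b) (shM C u)) = neg (shO C A) (shO C B') (cmp C (shM C u') x)"
    using x(3) comp_neg_r[OF su sb] comp_neg_l[OF x(1) su'] by simp
  hence "cmp C (shM C b) (shM C u) = cmp C (shM C u') x"
    using neg_neg_eq[OF comp_hom[OF su sb] comp_hom[OF x(1) su']] by blast
  hence "shM C (cmp C b u) = shM C (cmp C u' a)" using sh_comp[OF m(3) b] sh_comp[OF a(1) m'(3)] a by simp
  hence "cmp C b u = cmp C u' a" using sh_inj comp_hom m(3) b a(1) m'(3) by blast
  thus ?thesis using a x by blast
qed

end



context TC
begin
lemma grp_eq2: "f \<in> Hom C X Y \<Longrightarrow> g \<in> Hom C X Y \<Longrightarrow> z \<in> Hom C X Y \<Longrightarrow> madd C f (neg X Y g) = z \<Longrightarrow> g = madd C f (neg X Y z)"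
proof -
  assume a: "f \<in> Hom C X Y" "g \<in> Hom C X Y" "z \<in> Hom C X Y" "madd C f (neg X Y g) = z"
  have "f = madd C g z" using grp_eq a by blast
  hence "madd C f (neg X Y z) = madd C g (madd C z (neg X Y z))" using add_assoc a neg_hom by simp
  thus ?thesis using add_neg add_zer a by simp
qed

lemma add_sub_cancel: "x \<in> Hom C X Y \<Longrightarrow> y \<in> Hom C X Y \<Longrightarrow> madd C x (madd C y (neg X Y x)) = y"
  by (metis add_assoc add_comm add_zer neg_add neg_hom)

lemma sub_self_zero: "x \<in> Hom C X Y \<Longrightarrow> y \<in> Hom C X Y \<Longrightarrow> x = y \<Longrightarrow> madd C x (neg X Y y) = zer C X Y"
  using add_neg by simp
end

locale MAIN = TC C for C :: "('o, 'm, 'e) tcat_scheme" +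
  fixes A B D u v w A' B' D' u' v' w' a b c b' c' h h'
    and FO :: "'o \<Rightarrow> 'x monoid" and FM \<pi> \<pi>'
  assumes T: "(A, B, D, u, v, w) \<in> tri C" and T': "(A', B', D', u', v', w') \<in> tri C"
   and P: "presents C (A, B, D, u, v, w) FO FM \<pi>" and P': "presents C (A', B', D', u', v', w') FO FM \<pi>'"
   and aH: "a \<in> Hom C A A'" and bH: "b \<in> Hom C B B'" and cH: "c \<in> Hom C D D'"
   and b'H: "b' \<in> Hom C B' B" and c'H: "c' \<in> Hom C D' D" and hH: "h \<in> Hom C D B" and h'H: "h' \<in> Hom C D' B'"
   and bu: "cmp C b u = cmp C u' a" and cv: "cmp C c v = cmp C v' b" and aw: "cmp C (shM C a) w = cmp C w' c"
   and cv': "cmp C c' v' = cmp C v b'"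
   and hD: "idm C D = madd C (cmp C c' c) (cmp C v h)"
   and hD': "idm C D' = madd C (cmp C c c') (cmp C v' h')"
   and cpi: "\<forall>X \<gamma>. \<gamma> \<in> Hom C X D \<longrightarrow> \<pi>' X (cmp C c \<gamma>) = \<pi> X \<gamma>"
begin

lemma mT: "A \<in> Ob C" "B \<in> Ob C" "D \<in> Ob C" "u \<in> Hom C A B" "v \<in> Hom C B D" "w \<in> Hom C D (shO C A)"
  using tri_mem[OF T] by blast+
lemma mT': "A' \<in> Ob C" "B' \<in> Ob C" "D' \<in> Ob C" "u' \<in> Hom C A' B'" "v' \<in> Hom C B' D'" "w' \<in> Hom C D' (shO C A')"
  using tri_mem[OF T'] by blast+

lemmas R = rot_tri[OF T]
lemmas R' = rot_tri[OF T']
lemmas RR = rot_tri[OF R]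
lemmas RR' = rot_tri[OF R']

lemma wv: "cmp C w v = zer C B (shO C A)" using L1[OF R] .
lemma w'v': "cmp C w' v' = zer C B' (shO C A')" using L1[OF R'] .

lemma suw: "cmp C (shM C u) w = zer C D (shO C B)"
proof -
  have su: "shM C u \<in> Hom C (shO C A) (shO C B)" using sh_hom mT by blast
  have "neg D (shO C B) (cmp C (shM C u) w) = zer C D (shO C B)"
    using L1[OF RR] comp_neg_l[OF mT(6) su] by simp
  thus ?thesis using neg_zero_iff comp_hom[OF mT(6) su] by blast
qed

lemma E0: assumes m: "m \<in> Hom C X A" and um: "cmp C u m = zer C X B" and am: "cmp C a m = zer C X A'"
  shows "m = zer C X A"
proof -
  have X: "X \<in> Ob C" using m hom_ob by blast
  have SX: "shO C X \<in> Ob C" using sh_ob X by blast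
  have sm: "shM C m \<in> Hom C (shO C X) (shO C A)" using sh_hom m by blast
  have su: "shM C u \<in> Hom C (shO C A) (shO C B)" using sh_hom mT by blast
  have sa: "shM C a \<in> Hom C (shO C A) (shO C A')" using sh_hom aH by blast
  have "cmp C (neg (shO C A) (shO C B) (shM C u)) (shM C m) = neg (shO C X) (shO C B) (cmp C (shM C u) (shM C m))"
    using comp_neg_l[OF sm su] .
  also have "\<dots> = neg (shO C X) (shO C B) (shM C (zer C X B))" using sh_comp[OF m mT(4)] um by simp
  also have "\<dots> = zer C (shO C X) (shO C B)" using sh_zer[OF X mT(2)] neg_zer[OF SX sh_ob[OF mT(2)]] by simp
  finally obtain n where n: "n \<in> Hom C (shO C X) D" "shM C m = cmp C w n" using L2[OF RR sm] by blast
  have cn: "cmp C c n \<in> Hom C (shO C X) D'" using comp_hom[OF n(1) cH] .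
  have "cmp C w' (cmp C c n) = cmp C (cmp C w' c) n" using assoc[OF n(1) cH mT'(6)] by simp
  also have "\<dots> = cmp C (shM C a) (cmp C w n)" using aw assoc[OF n(1) mT(6) sa] by simp
  also have "\<dots> = shM C (cmp C a m)" using n(2) sh_comp[OF m aH] by simp
  also have "\<dots> = zer C (shO C X) (shO C A')" using am sh_zer[OF X mT'(1)] by simp
  finally obtain p where p: "p \<in> Hom C (shO C X) B'" "cmp C c n = cmp C v' p" using L2[OF R' cn] by blast
  have hn: "cmp C h n \<in> Hom C (shO C X) B" using comp_hom[OF n(1) hH] .
  have b'p: "cmp C b' p \<in> Hom C (shO C X) B" using comp_hom[OF p(1) b'H] .
  have c'c: "cmp C c' c \<in> Hom C D D" using comp_hom[OF cH c'H] .
  have vh: "cmp C v h \<in> Hom C D D" using comp_hom[OF hH mT(5)] .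
  have "n = cmp C (idm C D) n" using id_l[OF n(1)] by simp
  also have "\<dots> = madd C (cmp C (cmp C c' c) n) (cmp C (cmp C v h) n)" using hD distr_r[OF n(1) c'c vh] by simp
  also have "\<dots> = madd C (cmp C c' (cmp C c n)) (cmp C v (cmp C h n))"
    using assoc[OF n(1) cH c'H] assoc[OF n(1) hH mT(5)] by simp
  also have "\<dots> = madd C (cmp C (cmp C c' v') p) (cmp C v (cmp C h n))"
    using p(2) assoc[OF p(1) mT'(5) c'H] by simp
  also have "\<dots> = madd C (cmp C v (cmp C b' p)) (cmp C v (cmp C h n))"
    using cv' assoc[OF p(1) b'H mT(5)] by simp
  also have "\<dots> = cmp C v (madd C (cmp C b' p) (cmp C h n))" using distr_l[OF b'p hn mT(5)] by simp
  finally have nn: "n = cmp C v (madd C (cmp C b' p) (cmp C h n))" .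
  have q: "madd C (cmp C b' p) (cmp C h n) \<in> Hom C (shO C X) B" using add_hom[OF b'p hn] .
  have "shM C m = cmp C w (cmp C v (madd C (cmp C b' p) (cmp C h n)))" using n(2) nn by simp
  also have "\<dots> = cmp C (cmp C w v) (madd C (cmp C b' p) (cmp C h n))" using assoc[OF q mT(5) mT(6)] by simp
  also have "\<dots> = zer C (shO C X) (shO C A)" using wv comp_zer_l[OF q sh_ob[OF mT(1)]] by simp
  also have "\<dots> = shM C (zer C X A)" using sh_zer[OF X mT(1)] by simp
  finally show ?thesis using sh_inj[OF m zer_hom[OF X mT(1)]] by blast
qed


lemma E1: assumes be: "\<beta> \<in> Hom C X B" and al: "\<alpha> \<in> Hom C X A'"
  and vb: "cmp C v \<beta> = zer C X D" and bb: "cmp C b \<beta> = cmp C u' \<alpha>"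
  shows "\<exists>m \<in> Hom C X A. cmp C u m = \<beta> \<and> cmp C a m = \<alpha>"
proof -
  have X: "X \<in> Ob C" using be hom_ob by blast
  have SX: "shO C X \<in> Ob C" using sh_ob X by blast
  obtain m0 where m0: "m0 \<in> Hom C X A" "\<beta> = cmp C u m0" using L2[OF T be vb] by blast
  have am0: "cmp C a m0 \<in> Hom C X A'" using comp_hom[OF m0(1) aH] .
  define \<delta>' where "\<delta>' = madd C \<alpha> (neg X A' (cmp C a m0))"
  have d': "\<delta>' \<in> Hom C X A'" unfolding \<delta>'_def using add_hom[OF al neg_hom[OF am0]] .
  have "cmp C u' (cmp C a m0) = cmp C b \<beta>" using m0(2) assoc[OF m0(1) aH mT'(4)] assoc[OF m0(1) mT(4) bH] bu by simp
  hence "cmp C u' \<delta>' = madd C (cmp C u' \<alpha>) (neg X B' (cmp C u' \<alpha>))"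
    unfolding \<delta>'_def using distr_l[OF al neg_hom[OF am0] mT'(4)] comp_neg_r[OF am0 mT'(4)] bb by simp
  also have "\<dots> = zer C X B'" using add_neg comp_hom[OF al mT'(4)] by blast
  finally have ud': "cmp C u' \<delta>' = zer C X B'" .
  have sd': "shM C \<delta>' \<in> Hom C (shO C X) (shO C A')" using sh_hom d' by blast
  have su': "shM C u' \<in> Hom C (shO C A') (shO C B')" using sh_hom mT' by blast
  have "cmp C (neg (shO C A') (shO C B') (shM C u')) (shM C \<delta>') = neg (shO C X) (shO C B') (cmp C (shM C u') (shM C \<delta>'))"
    using comp_neg_l[OF sd' su'] .
  also have "\<dots> = neg (shO C X) (shO C B') (shM C (zer C X B'))" using sh_comp[OF d' mT'(4)] ud' by simp
  also have "\<dots> = zer C (shO C X) (shO C B')" using sh_zer[OF X mT'(2)] neg_zer[OF SX sh_ob[OF mT'(2)]] by simp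
  finally obtain n' where n': "n' \<in> Hom C (shO C X) D'" "shM C \<delta>' = cmp C w' n'" using L2[OF RR' sd'] by blast
  have c'n': "cmp C c' n' \<in> Hom C (shO C X) D" using comp_hom[OF n'(1) c'H] .
  have k: "cmp C w (cmp C c' n') \<in> Hom C (shO C X) (shO C A)" using comp_hom[OF c'n' mT(6)] .
  obtain \<delta> where d: "\<delta> \<in> Hom C X A" "cmp C w (cmp C c' n') = shM C \<delta>" using sh_full[OF X mT(1) k] by blast
  have su: "shM C u \<in> Hom C (shO C A) (shO C B)" using sh_hom mT by blast
  have sa: "shM C a \<in> Hom C (shO C A) (shO C A')" using sh_hom aH by blast
  have "shM C (cmp C u \<delta>) = cmp C (shM C u) (cmp C w (cmp C c' n'))" using sh_comp[OF d(1) mT(4)] d(2) by simp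
  also have "\<dots> = cmp C (cmp C (shM C u) w) (cmp C c' n')" using assoc[OF c'n' mT(6) su] by simp
  also have "\<dots> = zer C (shO C X) (shO C B)" using suw comp_zer_l[OF c'n' sh_ob[OF mT(2)]] by simp
  also have "\<dots> = shM C (zer C X B)" using sh_zer[OF X mT(2)] by simp
  finally have ud: "cmp C u \<delta> = zer C X B" using sh_inj[OF comp_hom[OF d(1) mT(4)] zer_hom[OF X mT(2)]] by blast
  have cc': "cmp C c c' \<in> Hom C D' D'" using comp_hom[OF c'H cH] .
  have v'h': "cmp C v' h' \<in> Hom C D' D'" using comp_hom[OF h'H mT'(5)] .
  have h'n': "cmp C h' n' \<in> Hom C (shO C X) B'" using comp_hom[OF n'(1) h'H] .
  have ccn: "cmp C c (cmp C c' n') \<in> Hom C (shO C X) D'" using comp_hom[OF c'n' cH] .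
  have "n' = cmp C (idm C D') n'" using id_l[OF n'(1)] by simp
  also have "\<dots> = madd C (cmp C (cmp C c c') n') (cmp C (cmp C v' h') n')" using hD' distr_r[OF n'(1) cc' v'h'] by simp
  also have "\<dots> = madd C (cmp C c (cmp C c' n')) (cmp C v' (cmp C h' n'))"
    using assoc[OF n'(1) c'H cH] assoc[OF n'(1) h'H mT'(5)] by simp
  finally have nn: "n' = madd C (cmp C c (cmp C c' n')) (cmp C v' (cmp C h' n'))" .
  have "cmp C w' n' = madd C (cmp C w' (cmp C c (cmp C c' n'))) (cmp C w' (cmp C v' (cmp C h' n')))"
    using nn distr_l[OF ccn comp_hom[OF h'n' mT'(5)] mT'(6)] by metis
  also have "cmp C w' (cmp C v' (cmp C h' n')) = zer C (shO C X) (shO C A')"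
    using assoc[OF h'n' mT'(5) mT'(6)] w'v' comp_zer_l[OF h'n' sh_ob[OF mT'(1)]] by simp
  finally have e1: "cmp C w' n' = cmp C w' (cmp C c (cmp C c' n'))" using add_zer comp_hom[OF ccn mT'(6)] by simp
  have "shM C (cmp C a \<delta>) = cmp C (shM C a) (cmp C w (cmp C c' n'))" using sh_comp[OF d(1) aH] d(2) by simp
  also have "\<dots> = cmp C (cmp C (shM C a) w) (cmp C c' n')" using assoc[OF c'n' mT(6) sa] by simp
  also have "\<dots> = cmp C w' (cmp C c (cmp C c' n'))" using aw assoc[OF c'n' cH mT'(6)] by simp
  also have "\<dots> = shM C \<delta>'" using e1 n'(2) by simp
  finally have ad: "cmp C a \<delta> = \<delta>'" using sh_inj[OF comp_hom[OF d(1) aH] d'] by blast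
  have mm: "madd C m0 \<delta> \<in> Hom C X A" using add_hom[OF m0(1) d(1)] .
  have "cmp C u (madd C m0 \<delta>) = \<beta>" using distr_l[OF m0(1) d(1) mT(4)] ud m0(2) add_zer be by simp
  moreover have "cmp C a (madd C m0 \<delta>) = \<alpha>" using distr_l[OF m0(1) d(1) aH] ad \<delta>'_def add_sub_cancel[OF am0 al] by simp
  ultimately show ?thesis using mm by blast
qed

lemma E2: assumes g: "\<gamma> \<in> Hom C X D" and b': "\<beta>' \<in> Hom C X B'" and e: "cmp C c \<gamma> = cmp C v' \<beta>'"
  shows "\<exists>\<beta> \<in> Hom C X B. \<exists>\<alpha> \<in> Hom C X A'. cmp C v \<beta> = \<gamma> \<and> cmp C b \<beta> = madd C \<beta>' (cmp C u' \<alpha>)"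
proof -
  have X: "X \<in> Ob C" using g hom_ob by blast
  have "\<pi> X \<gamma> = \<pi>' X (cmp C c \<gamma>)" using cpi g by simp
  also have "\<dots> = \<one>\<^bsub>FO X\<^esub>" using e pres_ker2[OF P' b' X] by simp
  finally obtain \<beta>0 where b0: "\<beta>0 \<in> Hom C X B" "\<gamma> = cmp C v \<beta>0" using pres_ker[OF P g] by blast
  have bb0: "cmp C b \<beta>0 \<in> Hom C X B'" using comp_hom[OF b0(1) bH] .
  have "cmp C v' (cmp C b \<beta>0) = cmp C v' \<beta>'" using e b0(2) assoc[OF b0(1) bH mT'(5)] assoc[OF b0(1) mT(5) cH] cv by simp
  hence "cmp C v' (madd C (cmp C b \<beta>0) (neg X B' \<beta>')) = zer C X D'"
    using distr_l[OF bb0 neg_hom[OF b'] mT'(5)] comp_neg_r[OF b' mT'(5)] add_neg comp_hom[OF b' mT'(5)] by simp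
  then obtain \<alpha>0 where a0: "\<alpha>0 \<in> Hom C X A'" "madd C (cmp C b \<beta>0) (neg X B' \<beta>') = cmp C u' \<alpha>0"
    using L2[OF T' add_hom[OF bb0 neg_hom[OF b']]] by blast
  have "cmp C b \<beta>0 = madd C \<beta>' (cmp C u' \<alpha>0)" using grp_eq[OF bb0 b' comp_hom[OF a0(1) mT'(4)] a0(2)] .
  thus ?thesis using b0 a0 by blast
qed

lemma E3: assumes g: "\<gamma>' \<in> Hom C X D'"
  shows "\<exists>\<gamma> \<in> Hom C X D. \<exists>\<beta>' \<in> Hom C X B'. \<gamma>' = madd C (cmp C c \<gamma>) (neg X D' (cmp C v' \<beta>'))"
proof -
  have X: "X \<in> Ob C" using g hom_ob by blast
  have "\<pi>' X \<gamma>' \<in> \<pi> X ` Hom C X D" using pres_car[OF P' g] pres_D(3)[OF P X] by simp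
  then obtain \<gamma> where ga: "\<gamma> \<in> Hom C X D" "\<pi>' X \<gamma>' = \<pi> X \<gamma>" by blast
  have cg: "cmp C c \<gamma> \<in> Hom C X D'" using comp_hom[OF ga(1) cH] .
  have "\<pi>' X (cmp C c \<gamma>) = \<pi>' X \<gamma>'" using cpi ga by simp
  hence "\<pi>' X (madd C (cmp C c \<gamma>) (neg X D' \<gamma>')) = \<one>\<^bsub>FO X\<^esub>" using pres_sub_one[OF P' cg g] by simp
  then obtain p where p: "p \<in> Hom C X B'" "madd C (cmp C c \<gamma>) (neg X D' \<gamma>') = cmp C v' p"
    using pres_ker[OF P' add_hom[OF cg neg_hom[OF g]]] by blast
  have "\<gamma>' = madd C (cmp C c \<gamma>) (neg X D' (cmp C v' p))" using grp_eq2[OF cg g comp_hom[OF p(1) mT'(5)] p(2)] .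
  thus ?thesis using ga p by blast
qed

end



lemma (in ring) extR: "x \<otimes> y = w \<Longrightarrow> x \<in> carrier R \<Longrightarrow> y \<in> carrier R \<Longrightarrow> z \<in> carrier R \<Longrightarrow> x \<otimes> (y \<otimes> z) = w \<otimes> z"
  by (metis m_assoc)

lemma (in ring) minus_zero_eq:
  assumes "a \<in> carrier R" "b \<in> carrier R" "a \<ominus> b = \<zero>"
  shows "a = b"
  using assms by (metis a_minus_def add.inv_closed minus_equality r_neg)

lemma (in ring) zlem: "x \<otimes> p = x \<Longrightarrow> q \<otimes> y = y \<Longrightarrow> p \<otimes> q = \<zero> \<Longrightarrow>
   x \<in> carrier R \<Longrightarrow> y \<in> carrier R \<Longrightarrow> p \<in> carrier R \<Longrightarrow> q \<in> carrier R \<Longrightarrow> x \<otimes> y = \<zero>"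
proof -
  assume a: "x \<otimes> p = x" "q \<otimes> y = y" "p \<otimes> q = \<zero>" "x \<in> carrier R" "y \<in> carrier R" "p \<in> carrier R" "q \<in> carrier R"
  have "x \<otimes> y = (x \<otimes> p) \<otimes> (q \<otimes> y)" using a by simp
  also have "\<dots> = x \<otimes> ((p \<otimes> q) \<otimes> y)" using a(4-7) by (simp add: m_assoc)
  also have "\<dots> = x \<otimes> (\<zero> \<otimes> y)" using a(3) by simp
  also have "\<dots> = \<zero>" using a by (simp add: l_null r_null)
  finally show ?thesis .
qed

lemma (in ring) addneg_cancel: "a \<in> carrier R \<Longrightarrow> b \<in> carrier R \<Longrightarrow> a \<oplus> (b \<oplus> \<ominus> a) = b"
  by (metis a_lcomm a_inv_closed r_neg r_zero)

locale ctr = ring R for R (structure) +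
  fixes e0 e2 f1 f3 d0 d1 d2
  assumes car: "e0 \<in> carrier R" "e2 \<in> carrier R" "f1 \<in> carrier R" "f3 \<in> carrier R"
     "d0 \<in> carrier R" "d1 \<in> carrier R" "d2 \<in> carrier R"
  and idem: "e0 \<otimes> e0 = e0" "e2 \<otimes> e2 = e2" "f1 \<otimes> f1 = f1" "f3 \<otimes> f3 = f3"
  and orth: "e0 \<otimes> e2 = \<zero>" "e0 \<otimes> f1 = \<zero>" "e0 \<otimes> f3 = \<zero>"
            "e2 \<otimes> e0 = \<zero>" "e2 \<otimes> f1 = \<zero>" "e2 \<otimes> f3 = \<zero>"
            "f1 \<otimes> e0 = \<zero>" "f1 \<otimes> e2 = \<zero>" "f1 \<otimes> f3 = \<zero>"
            "f3 \<otimes> e0 = \<zero>" "f3 \<otimes> e2 = \<zero>" "f3 \<otimes> f1 = \<zero>"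
  and supp: "d0 \<otimes> e0 = d0" "f1 \<otimes> d0 = d0" "d1 \<otimes> f1 = d1" "e2 \<otimes> d1 = d1" "d2 \<otimes> e2 = d2" "f3 \<otimes> d2 = d2"
  and cpx: "d1 \<otimes> d0 = \<zero>" "d2 \<otimes> d1 = \<zero>"
  and R0: "\<And>m. m \<in> carrier R \<Longrightarrow> e0 \<otimes> m = m \<Longrightarrow> d0 \<otimes> m = \<zero> \<Longrightarrow> m = \<zero>"
  and R1: "\<And>x. x \<in> carrier R \<Longrightarrow> f1 \<otimes> x = x \<Longrightarrow> d1 \<otimes> x = \<zero> \<Longrightarrow> \<exists>m\<in>carrier R. e0 \<otimes> m = m \<and> d0 \<otimes> m = x"
  and R2: "\<And>y. y \<in> carrier R \<Longrightarrow> e2 \<otimes> y = y \<Longrightarrow> d2 \<otimes> y = \<zero> \<Longrightarrow> \<exists>x\<in>carrier R. f1 \<otimes> x = x \<and> d1 \<otimes> x = y"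
  and R3: "\<And>z. z \<in> carrier R \<Longrightarrow> f3 \<otimes> z = z \<Longrightarrow> \<exists>y\<in>carrier R. e2 \<otimes> y = y \<and> d2 \<otimes> y = z"
begin

lemmas B = idem orth supp cpx
lemmas BX = B[THEN extR]

lemma main: "\<exists>\<Phi>\<in>carrier R. \<exists>\<Psi>\<in>carrier R. \<Psi> \<otimes> \<Phi> = e0 \<oplus> e2 \<and> \<Phi> \<otimes> \<Psi> = f1 \<oplus> f3 \<and>
   (f1 \<oplus> f3) \<otimes> \<Phi> = \<Phi> \<and> \<Phi> \<otimes> (e0 \<oplus> e2) = \<Phi> \<and> (e0 \<oplus> e2) \<otimes> \<Psi> = \<Psi> \<and> \<Psi> \<otimes> (f1 \<oplus> f3) = \<Psi>"
proof -
  note C = car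
  obtain y3 where y3: "y3 \<in> carrier R" "e2 \<otimes> y3 = y3" "d2 \<otimes> y3 = f3" using R3[of f3] C idem by blast
  have y3X: "\<And>z. z \<in> carrier R \<Longrightarrow> e2 \<otimes> (y3 \<otimes> z) = y3 \<otimes> z" "\<And>z. z \<in> carrier R \<Longrightarrow> d2 \<otimes> (y3 \<otimes> z) = f3 \<otimes> z"
    using y3(2,3)[THEN extR] y3(1) C by auto
  define H3 where "H3 = y3 \<otimes> f3"
  have H3c: "H3 \<in> carrier R" unfolding H3_def using y3 C by simp
  have H3a: "e2 \<otimes> H3 = H3" "H3 \<otimes> f3 = H3" "d2 \<otimes> H3 = f3"
    unfolding H3_def using y3 C B BX y3X by (simp_all add: ring_simprules)
  have H3X: "\<And>z. z \<in> carrier R \<Longrightarrow> e2 \<otimes> (H3 \<otimes> z) = H3 \<otimes> z" "\<And>z. z \<in> carrier R \<Longrightarrow> H3 \<otimes> (f3 \<otimes> z) = H3 \<otimes> z"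
     "\<And>z. z \<in> carrier R \<Longrightarrow> d2 \<otimes> (H3 \<otimes> z) = f3 \<otimes> z"
    using H3a[THEN extR] H3c C by auto
  define y where "y = e2 \<ominus> H3 \<otimes> d2"
  have yc: "y \<in> carrier R" unfolding y_def using C H3c by simp
  have "e2 \<otimes> y = y" unfolding y_def using C H3c B BX H3a H3X by (simp add: ring_simprules)
  moreover have "d2 \<otimes> y = \<zero>" unfolding y_def using C H3c B BX H3a H3X by (simp add: ring_simprules)
  ultimately obtain x2 where x2: "x2 \<in> carrier R" "f1 \<otimes> x2 = x2" "d1 \<otimes> x2 = y" using R2 yc by blast
  have x2X: "\<And>z. z \<in> carrier R \<Longrightarrow> f1 \<otimes> (x2 \<otimes> z) = x2 \<otimes> z" "\<And>z. z \<in> carrier R \<Longrightarrow> d1 \<otimes> (x2 \<otimes> z) = y \<otimes> z"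
    using x2(2,3)[THEN extR] x2(1) C by auto
  define H2 where "H2 = x2 \<otimes> e2"
  have H2c: "H2 \<in> carrier R" unfolding H2_def using x2 C by simp
  have H2a: "f1 \<otimes> H2 = H2" "H2 \<otimes> e2 = H2" "d1 \<otimes> H2 = e2 \<ominus> H3 \<otimes> d2"
    unfolding H2_def using x2 C B BX H3a H3X H3c by (simp_all add: x2X y_def ring_simprules)
  have H2X: "\<And>z. z \<in> carrier R \<Longrightarrow> f1 \<otimes> (H2 \<otimes> z) = H2 \<otimes> z" "\<And>z. z \<in> carrier R \<Longrightarrow> H2 \<otimes> (e2 \<otimes> z) = H2 \<otimes> z"
     "\<And>z. z \<in> carrier R \<Longrightarrow> d1 \<otimes> (H2 \<otimes> z) = (e2 \<ominus> H3 \<otimes> d2) \<otimes> z"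
    using H2a[THEN extR] H2c C by auto
  define x where "x = f1 \<ominus> H2 \<otimes> d1"
  have xc: "x \<in> carrier R" unfolding x_def using C H2c by simp
  have "f1 \<otimes> x = x" unfolding x_def using C H2c H3c B BX H2a H2X by (simp add: ring_simprules)
  moreover have "d1 \<otimes> x = \<zero>" unfolding x_def using C H2c H3c B BX H2a H2X H3a H3X by (simp add: ring_simprules)
  ultimately obtain m1 where m1: "m1 \<in> carrier R" "e0 \<otimes> m1 = m1" "d0 \<otimes> m1 = x" using R1 xc by blast
  have m1X: "\<And>z. z \<in> carrier R \<Longrightarrow> e0 \<otimes> (m1 \<otimes> z) = m1 \<otimes> z" "\<And>z. z \<in> carrier R \<Longrightarrow> d0 \<otimes> (m1 \<otimes> z) = x \<otimes> z"
    using m1(2,3)[THEN extR] m1(1) C by auto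
  define H1 where "H1 = m1 \<otimes> f1"
  have H1c: "H1 \<in> carrier R" unfolding H1_def using m1 C by simp
  have H1a: "e0 \<otimes> H1 = H1" "H1 \<otimes> f1 = H1" "d0 \<otimes> H1 = f1 \<ominus> H2 \<otimes> d1"
    unfolding H1_def using m1 C B BX H2a H2X H2c by (simp_all add: m1X x_def ring_simprules)
  have H1X: "\<And>z. z \<in> carrier R \<Longrightarrow> e0 \<otimes> (H1 \<otimes> z) = H1 \<otimes> z" "\<And>z. z \<in> carrier R \<Longrightarrow> H1 \<otimes> (f1 \<otimes> z) = H1 \<otimes> z"
     "\<And>z. z \<in> carrier R \<Longrightarrow> d0 \<otimes> (H1 \<otimes> z) = (f1 \<ominus> H2 \<otimes> d1) \<otimes> z"
    using H1a[THEN extR] H1c C by auto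
  define m where "m = e0 \<ominus> H1 \<otimes> d0"
  have mc: "m \<in> carrier R" unfolding m_def using C H1c by simp
  have "e0 \<otimes> m = m" unfolding m_def using C H1c B BX H1a H1X by (simp add: ring_simprules)
  moreover have "d0 \<otimes> m = \<zero>"
  proof -
    have "d0 \<otimes> m = d0 \<otimes> e0 \<ominus> (d0 \<otimes> H1) \<otimes> d0" unfolding m_def using C H1c
      by (simp add: r_distr minus_eq r_minus m_assoc)
    also have "\<dots> = d0 \<ominus> (f1 \<ominus> H2 \<otimes> d1) \<otimes> d0" using H1a supp by simp
    also have "\<dots> = d0 \<ominus> (f1 \<otimes> d0 \<ominus> H2 \<otimes> (d1 \<otimes> d0))" using C H2c
      by (simp add: l_distr minus_eq l_minus m_assoc)
    also have "\<dots> = \<zero>" using C H2c supp cpx by (simp add: minus_eq r_neg)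
    finally show ?thesis .
  qed
  ultimately have "m = \<zero>" using R0 mc by blast
  hence "e0 \<ominus> H1 \<otimes> d0 = \<zero>" unfolding m_def .
  hence H1d0: "H1 \<otimes> d0 = e0" using minus_zero_eq[of e0 "H1 \<otimes> d0"] C H1c by simp
  have e0r: "e0 \<otimes> e0 = e0" using idem by simp
  have ss: "d0 \<otimes> e0 = d0" "f1 \<otimes> d0 = d0" "d1 \<otimes> f1 = d1" "e2 \<otimes> d1 = d1" "d2 \<otimes> e2 = d2" "f3 \<otimes> d2 = d2"
    using supp by simp_all
  note Z = zlem[OF _ _ _ _ _ _ _]
  have z1: "H1 \<otimes> d2 = \<zero>" by (rule zlem[OF H1a(2) ss(6) orth(9)]) (use C H1c in auto)
  have z2: "d1 \<otimes> d2 = \<zero>" by (rule zlem[OF ss(3) ss(6) orth(9)]) (use C in auto)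
  have z3: "H3 \<otimes> d0 = \<zero>" by (rule zlem[OF H3a(2) ss(2) orth(12)]) (use C H3c in auto)
  have z4: "H3 \<otimes> H2 = \<zero>" by (rule zlem[OF H3a(2) H2a(1) orth(12)]) (use C H3c H2c in auto)
  have z5: "d0 \<otimes> d1 = \<zero>" by (rule zlem[OF ss(1) ss(4) orth(1)]) (use C in auto)
  have z6: "d0 \<otimes> H3 = \<zero>" by (rule zlem[OF ss(1) H3a(1) orth(1)]) (use C H3c in auto)
  have z7: "H2 \<otimes> H1 = \<zero>" by (rule zlem[OF H2a(2) H1a(1) orth(4)]) (use C H1c H2c in auto)
  have z8: "d2 \<otimes> H1 = \<zero>" by (rule zlem[OF ss(5) H1a(1) orth(4)]) (use C H1c in auto)
  define \<Phi> where "\<Phi> = d0 \<oplus> H2 \<oplus> d2"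
  define \<Psi>0 where "\<Psi>0 = H1 \<oplus> d1 \<oplus> H3"
  define N where "N = H1 \<otimes> H2"
  define M where "M = H2 \<otimes> H3"
  have \<Phi>c: "\<Phi> \<in> carrier R" unfolding \<Phi>_def using C H2c by simp
  have \<Psi>0c: "\<Psi>0 \<in> carrier R" unfolding \<Psi>0_def using C H1c H3c by simp
  have Nc: "N \<in> carrier R" unfolding N_def using H1c H2c by simp
  have Mc: "M \<in> carrier R" unfolding M_def using H3c H2c by simp
  have "\<Psi>0 \<otimes> \<Phi> = (H1 \<otimes> d0 \<oplus> H1 \<otimes> H2 \<oplus> H1 \<otimes> d2) \<oplus> (d1 \<otimes> d0 \<oplus> d1 \<otimes> H2 \<oplus> d1 \<otimes> d2) \<oplus> (H3 \<otimes> d0 \<oplus> H3 \<otimes> H2 \<oplus> H3 \<otimes> d2)"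
    unfolding \<Phi>_def \<Psi>0_def using C H1c H2c H3c by (simp add: l_distr r_distr a_ac)
  also have "\<dots> = (e0 \<oplus> N \<oplus> \<zero>) \<oplus> (\<zero> \<oplus> (e2 \<ominus> H3 \<otimes> d2) \<oplus> \<zero>) \<oplus> (\<zero> \<oplus> \<zero> \<oplus> H3 \<otimes> d2)"
    using H1d0 z1 z2 z3 z4 cpx H2a N_def by simp
  also have "\<dots> = (e0 \<oplus> e2) \<oplus> N" using C H3c Nc by (simp add: ring_simprules)
  finally have PsiPhi: "\<Psi>0 \<otimes> \<Phi> = (e0 \<oplus> e2) \<oplus> N" .
  have "\<Phi> \<otimes> \<Psi>0 = (d0 \<otimes> H1 \<oplus> d0 \<otimes> d1 \<oplus> d0 \<otimes> H3) \<oplus> (H2 \<otimes> H1 \<oplus> H2 \<otimes> d1 \<oplus> H2 \<otimes> H3) \<oplus> (d2 \<otimes> H1 \<oplus> d2 \<otimes> d1 \<oplus> d2 \<otimes> H3)"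
    unfolding \<Phi>_def \<Psi>0_def using C H1c H2c H3c by (simp add: l_distr r_distr a_ac)
  also have "\<dots> = ((f1 \<ominus> H2 \<otimes> d1) \<oplus> \<zero> \<oplus> \<zero>) \<oplus> (\<zero> \<oplus> H2 \<otimes> d1 \<oplus> M) \<oplus> (\<zero> \<oplus> \<zero> \<oplus> f3)"
    using H1a z5 z6 z7 z8 cpx H3a M_def by simp
  also have "\<dots> = (f1 \<oplus> f3) \<oplus> M" using C H2c Mc by (simp add: ring_simprules)
  finally have PhiPsi: "\<Phi> \<otimes> \<Psi>0 = (f1 \<oplus> f3) \<oplus> M" .
  define eP where "eP = e0 \<oplus> e2"
  define fQ where "fQ = f1 \<oplus> f3"
  have ePc: "eP \<in> carrier R" unfolding eP_def using C by simp
  have fQc: "fQ \<in> carrier R" unfolding fQ_def using C by simp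
  have e2H1: "e2 \<otimes> H1 = \<zero>" by (rule zlem[OF idem(2) H1a(1) orth(4)]) (use C H1c in auto)
  have H2e0: "H2 \<otimes> e0 = \<zero>" by (rule zlem[OF H2a(2) idem(1) orth(4)]) (use C H2c in auto)
  have f3H2: "f3 \<otimes> H2 = \<zero>" by (rule zlem[OF idem(4) H2a(1) orth(12)]) (use C H2c in auto)
  have H3f1: "H3 \<otimes> f1 = \<zero>" by (rule zlem[OF H3a(2) idem(3) orth(12)]) (use C H3c in auto)
  have ePP: "eP \<otimes> eP = eP" unfolding eP_def using C idem orth by (simp add: l_distr r_distr)
  have fQQ: "fQ \<otimes> fQ = fQ" unfolding fQ_def using C idem orth by (simp add: l_distr r_distr)
  have ePN: "eP \<otimes> N = N" unfolding eP_def N_def using C H1c H2c H1a e2H1 by (simp add: l_distr m_assoc[symmetric])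
  have NeP: "N \<otimes> eP = N" unfolding eP_def N_def using C H1c H2c H2a H2e0 by (simp add: r_distr m_assoc)
  have NN: "N \<otimes> N = \<zero>" unfolding N_def using C H1c H2c z7
    by (simp add: m_assoc[symmetric]) (simp add: m_assoc)
  have fQM: "fQ \<otimes> M = M" unfolding fQ_def M_def using C H3c H2c H2a f3H2 by (simp add: l_distr m_assoc[symmetric])
  have MfQ: "M \<otimes> fQ = M" unfolding fQ_def M_def using C H3c H2c H3a H3f1 by (simp add: r_distr m_assoc)
  have MM: "M \<otimes> M = \<zero>" unfolding M_def using C H3c H2c z4
    by (simp add: m_assoc[symmetric]) (simp add: m_assoc)
  have z9: "f1 \<otimes> d2 = \<zero>" by (rule zlem[OF idem(3) ss(6) orth(9)]) (use C in auto)
  have z10: "f3 \<otimes> d0 = \<zero>" by (rule zlem[OF idem(4) ss(2) orth(12)]) (use C in auto)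
  have z11: "d0 \<otimes> e2 = \<zero>" by (rule zlem[OF ss(1) idem(2) orth(1)]) (use C in auto)
  have z12: "d2 \<otimes> e0 = \<zero>" by (rule zlem[OF ss(5) idem(1) orth(4)]) (use C in auto)
  have z13: "e0 \<otimes> d1 = \<zero>" by (rule zlem[OF idem(1) ss(4) orth(1)]) (use C in auto)
  have z14: "e0 \<otimes> H3 = \<zero>" by (rule zlem[OF idem(1) H3a(1) orth(1)]) (use C H3c in auto)
  have z15: "H1 \<otimes> f3 = \<zero>" by (rule zlem[OF H1a(2) idem(4) orth(9)]) (use C H1c in auto)
  have z16: "d1 \<otimes> f3 = \<zero>" by (rule zlem[OF ss(3) idem(4) orth(9)]) (use C in auto)
  have fQPhi: "fQ \<otimes> \<Phi> = \<Phi>" unfolding fQ_def \<Phi>_def using C H2c ss H2a z9 z10 f3H2 by (simp add: l_distr r_distr a_ac)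
  have PhieP: "\<Phi> \<otimes> eP = \<Phi>" unfolding eP_def \<Phi>_def using C H2c ss H2a z11 z12 H2e0 by (simp add: l_distr r_distr a_ac)
  have ePPsi: "eP \<otimes> \<Psi>0 = \<Psi>0" unfolding eP_def \<Psi>0_def using C H1c H3c ss H1a H3a z13 z14 e2H1 by (simp add: l_distr r_distr a_ac)
  have PsifQ: "\<Psi>0 \<otimes> fQ = \<Psi>0" unfolding fQ_def \<Psi>0_def using C H1c H3c ss H1a H3a z15 z16 H3f1 by (simp add: l_distr r_distr a_ac)
  define \<Psi>L where "\<Psi>L = (eP \<ominus> N) \<otimes> \<Psi>0"
  define \<Psi>R where "\<Psi>R = \<Psi>0 \<otimes> (fQ \<ominus> M)"
  have \<Psi>Lc: "\<Psi>L \<in> carrier R" unfolding \<Psi>L_def using ePc Nc \<Psi>0c by simp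
  have \<Psi>Rc: "\<Psi>R \<in> carrier R" unfolding \<Psi>R_def using fQc Mc \<Psi>0c by simp
  have L: "\<Psi>L \<otimes> \<Phi> = eP"
  proof -
    have "\<Psi>L \<otimes> \<Phi> = (eP \<ominus> N) \<otimes> (eP \<oplus> N)" unfolding \<Psi>L_def using PsiPhi ePc Nc \<Psi>0c \<Phi>c eP_def
      by (simp add: m_assoc)
    also have "\<dots> = eP" using ePP ePN NeP NN ePc Nc by (simp add: ring_simprules addneg_cancel)
    finally show ?thesis .
  qed
  have Rr: "\<Phi> \<otimes> \<Psi>R = fQ"
  proof -
    have "\<Phi> \<otimes> \<Psi>R = (fQ \<oplus> M) \<otimes> (fQ \<ominus> M)" unfolding \<Psi>R_def using PhiPsi fQc Mc \<Psi>0c \<Phi>c fQ_def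
      by (simp add: m_assoc[symmetric])
    also have "\<dots> = fQ" using fQQ fQM MfQ MM fQc Mc by (simp add: ring_simprules addneg_cancel)
    finally show ?thesis .
  qed
  have LfQ: "\<Psi>L \<otimes> fQ = \<Psi>L" unfolding \<Psi>L_def using PsifQ ePc Nc \<Psi>0c fQc by (simp add: m_assoc)
  have ePR: "eP \<otimes> \<Psi>R = \<Psi>R" unfolding \<Psi>R_def using ePPsi ePc Mc \<Psi>0c fQc by (simp add: m_assoc[symmetric])
  have LR: "\<Psi>L = \<Psi>R"
  proof -
    have "\<Psi>L = \<Psi>L \<otimes> (\<Phi> \<otimes> \<Psi>R)" using LfQ Rr by simp
    also have "\<dots> = (\<Psi>L \<otimes> \<Phi>) \<otimes> \<Psi>R" using \<Psi>Lc \<Phi>c \<Psi>Rc by (simp add: m_assoc)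
    finally show ?thesis using L ePR by simp
  qed
  show ?thesis
    apply (rule bexI[OF _ \<Phi>c], rule bexI[OF _ \<Psi>Lc])
    using L Rr LR fQPhi PhieP ePR LfQ unfolding eP_def fQ_def by simp
qed

end



datatype ix = I1 | I2 | I3

context TC begin
definition endR :: "'o \<Rightarrow> 'm ring" where
  "endR S = \<lparr>carrier = Hom C S S, mult = cmp C, one = idm C S, zero = zer C S S, add = madd C\<rparr>"

lemma endR_ring: assumes S: "S \<in> Ob C" shows "ring (endR S)"
proof (rule ringI)
  show "abelian_group (endR S)"
  proof (rule abelian_groupI)
    fix x y z assume "x \<in> carrier (endR S)" "y \<in> carrier (endR S)" "z \<in> carrier (endR S)"
    hence h: "x \<in> Hom C S S" "y \<in> Hom C S S" "z \<in> Hom C S S" by (simp_all add: endR_def)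
    show "x \<oplus>\<^bsub>endR S\<^esub> y \<in> carrier (endR S)" using add_hom[OF h(1,2)] by (simp add: endR_def)
    show "x \<oplus>\<^bsub>endR S\<^esub> y \<oplus>\<^bsub>endR S\<^esub> z = x \<oplus>\<^bsub>endR S\<^esub> (y \<oplus>\<^bsub>endR S\<^esub> z)"
      using add_assoc[OF h] by (simp add: endR_def)
    show "x \<oplus>\<^bsub>endR S\<^esub> y = y \<oplus>\<^bsub>endR S\<^esub> x" using add_comm[OF h(1,2)] by (simp add: endR_def)
    show "\<zero>\<^bsub>endR S\<^esub> \<oplus>\<^bsub>endR S\<^esub> x = x" using zer_add[OF h(1)] by (simp add: endR_def)
    show "\<exists>y\<in>carrier (endR S). y \<oplus>\<^bsub>endR S\<^esub> x = \<zero>\<^bsub>endR S\<^esub>"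
      using neg_hom[OF h(1)] neg_add[OF h(1)] by (auto simp: endR_def)
  next
    show "\<zero>\<^bsub>endR S\<^esub> \<in> carrier (endR S)" using zer_hom[OF S S] by (simp add: endR_def)
  qed
  show "monoid (endR S)"
  proof (rule monoidI)
    fix x y z assume "x \<in> carrier (endR S)" "y \<in> carrier (endR S)" "z \<in> carrier (endR S)"
    hence h: "x \<in> Hom C S S" "y \<in> Hom C S S" "z \<in> Hom C S S" by (simp_all add: endR_def)
    show "x \<otimes>\<^bsub>endR S\<^esub> y \<in> carrier (endR S)" using comp_hom[OF h(2,1)] by (simp add: endR_def)
    show "x \<otimes>\<^bsub>endR S\<^esub> y \<otimes>\<^bsub>endR S\<^esub> z = x \<otimes>\<^bsub>endR S\<^esub> (y \<otimes>\<^bsub>endR S\<^esub> z)"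
      using assoc[OF h(3,2,1)] by (simp add: endR_def)
    show "\<one>\<^bsub>endR S\<^esub> \<otimes>\<^bsub>endR S\<^esub> x = x" using id_l[OF h(1)] by (simp add: endR_def)
    show "x \<otimes>\<^bsub>endR S\<^esub> \<one>\<^bsub>endR S\<^esub> = x" using id_r[OF h(1)] by (simp add: endR_def)
  next
    show "\<one>\<^bsub>endR S\<^esub> \<in> carrier (endR S)" using id_hom[OF S] by (simp add: endR_def)
  qed
next
  fix x y z assume "x \<in> carrier (endR S)" "y \<in> carrier (endR S)" "z \<in> carrier (endR S)"
  hence h: "x \<in> Hom C S S" "y \<in> Hom C S S" "z \<in> Hom C S S" by (simp_all add: endR_def)
  show "(x \<oplus>\<^bsub>endR S\<^esub> y) \<otimes>\<^bsub>endR S\<^esub> z = x \<otimes>\<^bsub>endR S\<^esub> z \<oplus>\<^bsub>endR S\<^esub> y \<otimes>\<^bsub>endR S\<^esub> z"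
    using distr_r[OF h(3) h(1) h(2)] by (simp add: endR_def)
  show "z \<otimes>\<^bsub>endR S\<^esub> (x \<oplus>\<^bsub>endR S\<^esub> y) = z \<otimes>\<^bsub>endR S\<^esub> x \<oplus>\<^bsub>endR S\<^esub> z \<otimes>\<^bsub>endR S\<^esub> y"
    using distr_l[OF h(1) h(2) h(3)] by (simp add: endR_def)
qed
end


locale GLUE = MAIN +
  fixes P Q S iP iQ pP pQ and oP oQ :: "ix \<Rightarrow> 'a" and inP prP inQ prQ :: "ix \<Rightarrow> 'b"
  assumes bS: "biproduct C P Q S iP iQ pP pQ"
  and inPH: "\<And>i. inP i \<in> Hom C (oP i) P" and prPH: "\<And>i. prP i \<in> Hom C P (oP i)"
  and inQH: "\<And>i. inQ i \<in> Hom C (oQ i) Q" and prQH: "\<And>i. prQ i \<in> Hom C Q (oQ i)"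
  and pinP: "\<And>i j. cmp C (prP i) (inP j) = (if i = j then idm C (oP i) else zer C (oP j) (oP i))"
  and pinQ: "\<And>i j. cmp C (prQ i) (inQ j) = (if i = j then idm C (oQ i) else zer C (oQ j) (oQ i))"
  and sumP: "madd C (madd C (cmp C (inP I1) (prP I1)) (cmp C (inP I2) (prP I2))) (cmp C (inP I3) (prP I3)) = idm C P"
  and sumQ: "madd C (madd C (cmp C (inQ I1) (prQ I1)) (cmp C (inQ I2) (prQ I2))) (cmp C (inQ I3) (prQ I3)) = idm C Q"
  and oPv: "oP I1 = A" "oP I2 = B'" "oP I3 = D"
  and oQv: "oQ I1 = A'" "oQ I2 = B" "oQ I3 = D'"
begin

lemma bSD: "S \<in> Ob C" "iP \<in> Hom C P S" "iQ \<in> Hom C Q S" "pP \<in> Hom C S P" "pQ \<in> Hom C S Q"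
  "cmp C pP iP = idm C P" "cmp C pQ iQ = idm C Q" "cmp C pP iQ = zer C Q P" "cmp C pQ iP = zer C P Q"
  "madd C (cmp C iP pP) (cmp C iQ pQ) = idm C S"
  using bS unfolding biproduct_def by blast+

lemma PQO: "P \<in> Ob C" "Q \<in> Ob C" using bSD hom_ob by blast+

definition ob :: "bool \<times> ix \<Rightarrow> 'a" where "ob l = (if fst l then oP (snd l) else oQ (snd l))"
definition io :: "bool \<times> ix \<Rightarrow> 'b" where "io l = (if fst l then cmp C iP (inP (snd l)) else cmp C iQ (inQ (snd l)))"
definition po :: "bool \<times> ix \<Rightarrow> 'b" where "po l = (if fst l then cmp C (prP (snd l)) pP else cmp C (prQ (snd l)) pQ)"
definition emb :: "bool \<times> ix \<Rightarrow> bool \<times> ix \<Rightarrow> 'b \<Rightarrow> 'b" where "emb l k f = cmp C (io l) (cmp C f (po k))"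

lemma ob_simps[simp]: "ob (True, I1) = A" "ob (True, I2) = B'" "ob (True, I3) = D"
  "ob (False, I1) = A'" "ob (False, I2) = B" "ob (False, I3) = D'"
  by (simp_all add: ob_def oPv oQv)

lemma obO: "ob l \<in> Ob C"
  using hom_ob1[OF inPH] hom_ob1[OF inQH] by (simp add: ob_def)

lemma ioH[simp]: "io l \<in> Hom C (ob l) S"
  using comp_hom[OF inPH bSD(2)] comp_hom[OF inQH bSD(3)] by (simp add: io_def ob_def)
lemma poH[simp]: "po l \<in> Hom C S (ob l)"
  using comp_hom[OF bSD(4) prPH] comp_hom[OF bSD(5) prQH] by (simp add: po_def ob_def)

lemma pio: "cmp C (po k) (io l) = (if k = l then idm C (ob k) else zer C (ob l) (ob k))"
proof -
  obtain b i where k: "k = (b, i)" by (cases k)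
  obtain b' j where l: "l = (b', j)" by (cases l)
  show ?thesis
  proof (cases b; cases b')
    assume "b" "b'"
    have "cmp C (po k) (io l) = cmp C (prP i) (cmp C (cmp C pP iP) (inP j))"
      using k l \<open>b\<close> \<open>b'\<close> by (simp add: po_def io_def assoc[OF comp_hom[OF inPH bSD(2)] bSD(4) prPH] assoc[OF inPH bSD(2) bSD(4)])
    also have "\<dots> = cmp C (prP i) (inP j)" using bSD(6) id_l[OF inPH] by simp
    finally show ?thesis using k l \<open>b\<close> \<open>b'\<close> pinP by (simp add: ob_def)
  next
    assume "\<not> b" "\<not> b'"
    have "cmp C (po k) (io l) = cmp C (prQ i) (cmp C (cmp C pQ iQ) (inQ j))"
      using k l \<open>\<not>b\<close> \<open>\<not>b'\<close> by (simp add: po_def io_def assoc[OF comp_hom[OF inQH bSD(3)] bSD(5) prQH] assoc[OF inQH bSD(3) bSD(5)])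
    also have "\<dots> = cmp C (prQ i) (inQ j)" using bSD(7) id_l[OF inQH] by simp
    finally show ?thesis using k l \<open>\<not>b\<close> \<open>\<not>b'\<close> pinQ by (simp add: ob_def)
  next
    assume "b" "\<not> b'"
    have "cmp C (po k) (io l) = cmp C (prP i) (cmp C (cmp C pP iQ) (inQ j))"
      using k l \<open>b\<close> \<open>\<not>b'\<close> by (simp add: po_def io_def assoc[OF comp_hom[OF inQH bSD(3)] bSD(4) prPH] assoc[OF inQH bSD(3) bSD(4)])
    also have "\<dots> = zer C (oQ j) (oP i)"
      using bSD(8) comp_zer_l[OF inQH PQO(1)] comp_zer_r[OF prPH hom_ob1[OF inQH]] by simp
    finally show ?thesis using k l \<open>b\<close> \<open>\<not>b'\<close> by (simp add: ob_def)
  next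
    assume "\<not> b" "b'"
    have "cmp C (po k) (io l) = cmp C (prQ i) (cmp C (cmp C pQ iP) (inP j))"
      using k l \<open>\<not>b\<close> \<open>b'\<close> by (simp add: po_def io_def assoc[OF comp_hom[OF inPH bSD(2)] bSD(5) prQH] assoc[OF inPH bSD(2) bSD(5)])
    also have "\<dots> = zer C (oP j) (oQ i)"
      using bSD(9) comp_zer_l[OF inPH PQO(2)] comp_zer_r[OF prQH hom_ob1[OF inPH]] by simp
    finally show ?thesis using k l \<open>\<not>b\<close> \<open>b'\<close> by (simp add: ob_def)
  qed
qed


lemma decP: assumes f: "f \<in> Hom C Y P"
  shows "f = madd C (madd C (cmp C (inP I1) (cmp C (prP I1) f)) (cmp C (inP I2) (cmp C (prP I2) f))) (cmp C (inP I3) (cmp C (prP I3) f))"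
proof -
  have h: "\<And>i. cmp C (inP i) (prP i) \<in> Hom C P P" using comp_hom[OF prPH inPH] by blast
  have "f = cmp C (idm C P) f" using id_l[OF f] by simp
  also have "\<dots> = madd C (madd C (cmp C (cmp C (inP I1) (prP I1)) f) (cmp C (cmp C (inP I2) (prP I2)) f)) (cmp C (cmp C (inP I3) (prP I3)) f)"
    using sumP[symmetric] distr_r[OF f add_hom[OF h h] h] distr_r[OF f h h] by simp
  also have "\<dots> = madd C (madd C (cmp C (inP I1) (cmp C (prP I1) f)) (cmp C (inP I2) (cmp C (prP I2) f))) (cmp C (inP I3) (cmp C (prP I3) f))"
    using assoc[OF f prPH inPH] by simp
  finally show ?thesis .
qed

lemma decQ: assumes f: "f \<in> Hom C Y Q"
  shows "f = madd C (madd C (cmp C (inQ I1) (cmp C (prQ I1) f)) (cmp C (inQ I2) (cmp C (prQ I2) f))) (cmp C (inQ I3) (cmp C (prQ I3) f))"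
proof -
  have h: "\<And>i. cmp C (inQ i) (prQ i) \<in> Hom C Q Q" using comp_hom[OF prQH inQH] by blast
  have "f = cmp C (idm C Q) f" using id_l[OF f] by simp
  also have "\<dots> = madd C (madd C (cmp C (cmp C (inQ I1) (prQ I1)) f) (cmp C (cmp C (inQ I2) (prQ I2)) f)) (cmp C (cmp C (inQ I3) (prQ I3)) f)"
    using sumQ[symmetric] distr_r[OF f add_hom[OF h h] h] distr_r[OF f h h] by simp
  also have "\<dots> = madd C (madd C (cmp C (inQ I1) (cmp C (prQ I1) f)) (cmp C (inQ I2) (cmp C (prQ I2) f))) (cmp C (inQ I3) (cmp C (prQ I3) f))"
    using assoc[OF f prQH inQH] by simp
  finally show ?thesis .
qed

lemma decS: assumes f: "f \<in> Hom C Y S"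
  shows "f = madd C (cmp C iP (cmp C pP f)) (cmp C iQ (cmp C pQ f))"
proof -
  have h: "cmp C iP pP \<in> Hom C S S" "cmp C iQ pQ \<in> Hom C S S" using comp_hom bSD by blast+
  have "f = cmp C (idm C S) f" using id_l[OF f] by simp
  also have "\<dots> = madd C (cmp C (cmp C iP pP) f) (cmp C (cmp C iQ pQ) f)"
    using bSD(10)[symmetric] distr_r[OF f h] by simp
  also have "\<dots> = madd C (cmp C iP (cmp C pP f)) (cmp C iQ (cmp C pQ f))"
    using assoc[OF f bSD(4) bSD(2)] assoc[OF f bSD(5) bSD(3)] by simp
  finally show ?thesis .
qed

lemma ext: assumes x: "x \<in> Hom C Y S" and y: "y \<in> Hom C Y S" and e: "\<And>k. cmp C (po k) x = cmp C (po k) y"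
  shows "x = y"
proof -
  have eP: "\<And>i. cmp C (prP i) (cmp C pP x) = cmp C (prP i) (cmp C pP y)"
  proof -
    fix i
    have "cmp C (prP i) (cmp C pP x) = cmp C (po (True, i)) x" using assoc[OF x bSD(4) prPH] by (simp add: po_def)
    also have "\<dots> = cmp C (po (True, i)) y" using e by blast
    also have "\<dots> = cmp C (prP i) (cmp C pP y)" using assoc[OF y bSD(4) prPH] by (simp add: po_def)
    finally show "cmp C (prP i) (cmp C pP x) = cmp C (prP i) (cmp C pP y)" .
  qed
  have eQ: "\<And>i. cmp C (prQ i) (cmp C pQ x) = cmp C (prQ i) (cmp C pQ y)"
  proof -
    fix i
    have "cmp C (prQ i) (cmp C pQ x) = cmp C (po (False, i)) x" using assoc[OF x bSD(5) prQH] by (simp add: po_def)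
    also have "\<dots> = cmp C (po (False, i)) y" using e by blast
    also have "\<dots> = cmp C (prQ i) (cmp C pQ y)" using assoc[OF y bSD(5) prQH] by (simp add: po_def)
    finally show "cmp C (prQ i) (cmp C pQ x) = cmp C (prQ i) (cmp C pQ y)" .
  qed
  have "cmp C pP x = cmp C pP y" using decP[OF comp_hom[OF x bSD(4)]] decP[OF comp_hom[OF y bSD(4)]] eP by metis
  moreover have "cmp C pQ x = cmp C pQ y" using decQ[OF comp_hom[OF x bSD(5)]] decQ[OF comp_hom[OF y bSD(5)]] eQ by metis
  ultimately show ?thesis using decS[OF x] decS[OF y] by metis
qed

lemma embH[simp]: "f \<in> Hom C (ob k) (ob l) \<Longrightarrow> emb l k f \<in> Hom C S S"
  unfolding emb_def using comp_hom poH ioH by blast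

lemma p_io: "g \<in> Hom C Y (ob l) \<Longrightarrow> cmp C (po k) (cmp C (io l) g) = (if k = l then g else zer C Y (ob k))"
proof -
  assume g: "g \<in> Hom C Y (ob l)"
  have "cmp C (po k) (cmp C (io l) g) = cmp C (cmp C (po k) (io l)) g" using assoc[OF g ioH poH] by simp
  thus ?thesis using pio id_l[OF g] comp_zer_l[OF g obO] by (cases "k = l") simp_all
qed

lemma p_emb: "f \<in> Hom C (ob m) (ob l) \<Longrightarrow> x \<in> Hom C Y S \<Longrightarrow>
   cmp C (po k) (cmp C (emb l m f) x) = (if k = l then cmp C f (cmp C (po m) x) else zer C Y (ob k))"
proof -
  assume f: "f \<in> Hom C (ob m) (ob l)" and x: "x \<in> Hom C Y S"
  have g: "cmp C f (cmp C (po m) x) \<in> Hom C Y (ob l)" using comp_hom[OF comp_hom[OF x poH] f] .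
  have "cmp C (emb l m f) x = cmp C (io l) (cmp C f (cmp C (po m) x))"
    unfolding emb_def using assoc[OF x comp_hom[OF poH f] ioH] assoc[OF x poH f] by simp
  thus ?thesis using p_io[OF g] by simp
qed

lemma p_emb0: "f \<in> Hom C (ob m) (ob l) \<Longrightarrow>
   cmp C (po k) (emb l m f) = (if k = l then cmp C f (po m) else zer C S (ob k))"
proof -
  assume f: "f \<in> Hom C (ob m) (ob l)"
  show ?thesis using p_emb[OF f id_hom[OF bSD(1)], of k] id_r[OF embH[OF f]] id_r[OF poH] by simp
qed

lemma p_add: "x \<in> Hom C Y S \<Longrightarrow> x' \<in> Hom C Y S \<Longrightarrow> cmp C (po k) (madd C x x') = madd C (cmp C (po k) x) (cmp C (po k) x')"
  using distr_l poH by blast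

lemma p_zer: "Y \<in> Ob C \<Longrightarrow> cmp C (po k) (zer C Y S) = zer C Y (ob k)"
  using comp_zer_r poH by blast


lemma ext6: assumes x: "x \<in> Hom C Y S" and y: "y \<in> Hom C Y S"
  and "cmp C (po (True, I1)) x = cmp C (po (True, I1)) y" "cmp C (po (True, I2)) x = cmp C (po (True, I2)) y"
      "cmp C (po (True, I3)) x = cmp C (po (True, I3)) y" "cmp C (po (False, I1)) x = cmp C (po (False, I1)) y"
      "cmp C (po (False, I2)) x = cmp C (po (False, I2)) y" "cmp C (po (False, I3)) x = cmp C (po (False, I3)) y"
  shows "x = y"
proof (rule ext[OF x y])
  fix k show "cmp C (po k) x = cmp C (po k) y"
  proof (cases k)
    case (Pair b i) thus ?thesis using assms by (cases b; cases i) simp_all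
  qed
qed

lemma distrS: "x \<in> Hom C S S \<Longrightarrow> y \<in> Hom C S S \<Longrightarrow> z \<in> Hom C Y S \<Longrightarrow> cmp C (madd C x y) z = madd C (cmp C x z) (cmp C y z)"
  using distr_r by blast

lemma mems: "u \<in> Hom C A B" "v \<in> Hom C B D" "u' \<in> Hom C A' B'" "v' \<in> Hom C B' D'" 
   "a \<in> Hom C A A'" "b \<in> Hom C B B'" "c \<in> Hom C D D'"
  using mT mT' aH bH cH by blast+
lemma obs: "A \<in> Ob C" "B \<in> Ob C" "D \<in> Ob C" "A' \<in> Ob C" "B' \<in> Ob C" "D' \<in> Ob C" "S \<in> Ob C"
  using mT mT' bSD by blast+


lemma p_embS: "f \<in> Hom C (ob m) (ob l) \<Longrightarrow> x \<in> Hom C S S \<Longrightarrow>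
   cmp C (po k) (cmp C (emb l m f) x) = (if k = l then cmp C f (cmp C (po m) x) else zer C S (ob k))"
  by (rule p_emb)
lemma p_addS: "x \<in> Hom C S S \<Longrightarrow> x' \<in> Hom C S S \<Longrightarrow> cmp C (po k) (madd C x x') = madd C (cmp C (po k) x) (cmp C (po k) x')"
  by (rule p_add)
lemma p_zerS: "cmp C (po k) (zer C S S) = zer C S (ob k)"
  using p_zer bSD(1) by blast
lemma distrSS: "x \<in> Hom C S S \<Longrightarrow> y \<in> Hom C S S \<Longrightarrow> z \<in> Hom C S S \<Longrightarrow> cmp C (madd C x y) z = madd C (cmp C x z) (cmp C y z)"
  using distr_r by blast
lemma compSS: "x \<in> Hom C S S \<Longrightarrow> y \<in> Hom C S S \<Longrightarrow> cmp C x y \<in> Hom C S S"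
  using comp_hom by blast
lemma addSS: "x \<in> Hom C S S \<Longrightarrow> y \<in> Hom C S S \<Longrightarrow> madd C x y \<in> Hom C S S"
  using add_hom by blast
lemma ext6S: "x \<in> Hom C S S \<Longrightarrow> y \<in> Hom C S S \<Longrightarrow>
 cmp C (po (True, I1)) x = cmp C (po (True, I1)) y \<Longrightarrow> cmp C (po (True, I2)) x = cmp C (po (True, I2)) y \<Longrightarrow>
 cmp C (po (True, I3)) x = cmp C (po (True, I3)) y \<Longrightarrow> cmp C (po (False, I1)) x = cmp C (po (False, I1)) y \<Longrightarrow>
 cmp C (po (False, I2)) x = cmp C (po (False, I2)) y \<Longrightarrow> cmp C (po (False, I3)) x = cmp C (po (False, I3)) y \<Longrightarrow> x = y"
  by (rule ext6)
abbreviation "lA \<equiv> (True, I1)"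
abbreviation "lB' \<equiv> (True, I2)"
abbreviation "lD \<equiv> (True, I3)"
abbreviation "lA' \<equiv> (False, I1)"
abbreviation "lB \<equiv> (False, I2)"
abbreviation "lD' \<equiv> (False, I3)"

definition "ee l = emb l l (idm C (ob l))"
definition "e0 = ee lA"
definition "e2 = madd C (ee lD) (ee lB')"
definition "f1 = madd C (ee lB) (ee lA')"
definition "f3 = ee lD'"
definition "d0 = madd C (emb lB lA u) (emb lA' lA a)"
definition "d1 = madd C (madd C (emb lD lB v) (emb lB' lB b)) (emb lB' lA' (neg A' B' u'))"
definition "d2 = madd C (emb lD' lD c) (emb lD' lB' (neg B' D' v'))"

lemmas SIMPS0 = compSS addSS p_embS p_emb0 p_addS p_zerS distrSS zer_add add_zer neg_zer add_neg neg_hom embH zer_hom id_hom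

lemma eeH[simp]: "ee l \<in> Hom C S S" unfolding ee_def using embH id_hom obO by blast
lemma vu0: "cmp C v u = zer C A D" using L1[OF T] .
lemma vu0': "cmp C v' u' = zer C A' D'" using L1[OF T'] .

lemma MEMS: "po lA \<in> Hom C S A" "po lB \<in> Hom C S B" "po lD \<in> Hom C S D"
  "po lA' \<in> Hom C S A'" "po lB' \<in> Hom C S B'" "po lD' \<in> Hom C S D'"
  "io lA \<in> Hom C A S" "io lB \<in> Hom C B S" "io lD \<in> Hom C D S"
  "io lA' \<in> Hom C A' S" "io lB' \<in> Hom C B' S" "io lD' \<in> Hom C D' S"
  "u \<in> Hom C A B" "v \<in> Hom C B D" "u' \<in> Hom C A' B'" "v' \<in> Hom C B' D'"
  "a \<in> Hom C A A'" "b \<in> Hom C B B'" "c \<in> Hom C D D'"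
  "A \<in> Ob C" "B \<in> Ob C" "D \<in> Ob C" "A' \<in> Ob C" "B' \<in> Ob C" "D' \<in> Ob C" "S \<in> Ob C"
  using poH[of lA] poH[of lB] poH[of lD] poH[of lA'] poH[of lB'] poH[of lD']
   ioH[of lA] ioH[of lB] ioH[of lD] ioH[of lA'] ioH[of lB'] ioH[of lD'] mems obs by simp_all


lemma gz: "g \<in> Hom C X Y \<Longrightarrow> cmp C g (zer C S X) = zer C S Y" using comp_zer_r bSD(1) by blast
lemma gc: "g \<in> Hom C X Y \<Longrightarrow> x \<in> Hom C S X \<Longrightarrow> cmp C g x \<in> Hom C S Y" using comp_hom by blast
lemma gnr: "g \<in> Hom C X Y \<Longrightarrow> x \<in> Hom C S X \<Longrightarrow> cmp C g (neg S X x) = neg S Y (cmp C g x)" using comp_neg_r by blast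
lemma gnl: "g \<in> Hom C X Y \<Longrightarrow> x \<in> Hom C S X \<Longrightarrow> cmp C (neg X Y g) x = neg S Y (cmp C g x)" using comp_neg_l by blast
lemma gadd: "g \<in> Hom C X Y \<Longrightarrow> x \<in> Hom C S X \<Longrightarrow> x' \<in> Hom C S X \<Longrightarrow> cmp C g (madd C x x') = madd C (cmp C g x) (cmp C g x')"
  using distr_l by blast
lemma gneg: "g \<in> Hom C X Y \<Longrightarrow> x \<in> Hom C S X \<Longrightarrow> cmp C (neg X Y g) x \<in> Hom C S Y" using comp_hom neg_hom by blast
lemma idS: "x \<in> Hom C S Y \<Longrightarrow> cmp C (idm C Y) x = x" using id_l by blast
lemma negS: "x \<in> Hom C S Y \<Longrightarrow> neg S Y x \<in> Hom C S Y" using neg_hom by blast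
lemma addS: "x \<in> Hom C S Y \<Longrightarrow> y \<in> Hom C S Y \<Longrightarrow> madd C x y \<in> Hom C S Y" using add_hom by blast
lemma zS: "Y \<in> Ob C \<Longrightarrow> zer C S Y \<in> Hom C S Y" using zer_hom bSD(1) by blast

lemmas BM = MEMS(1-19) id_hom[OF obs(1)] id_hom[OF obs(2)] id_hom[OF obs(3)] id_hom[OF obs(4)] id_hom[OF obs(5)] id_hom[OF obs(6)]
lemmas BASE = BM[THEN gz] BM[THEN gc] BM[THEN gnr] BM[THEN gnl] BM[THEN gadd] BM[THEN gneg]
lemmas SIMPS = SIMPS0 BASE idS negS addS zS MEMS
lemma bux: "x \<in> Hom C S A \<Longrightarrow> cmp C b (cmp C u x) = cmp C u' (cmp C a x)"
  using assoc[OF _ mems(1) mems(6)] assoc[OF _ mems(5) mems(3)] bu by metis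
lemma vux: "x \<in> Hom C S A \<Longrightarrow> cmp C v (cmp C u x) = zer C S D"
  using assoc[OF _ mems(1) mems(2)] vu0 comp_zer_l obs by metis
lemma cvx: "x \<in> Hom C S B \<Longrightarrow> cmp C c (cmp C v x) = cmp C v' (cmp C b x)"
  using assoc[OF _ mems(2) mems(7)] assoc[OF _ mems(6) mems(4)] cv by metis
lemma vux': "x \<in> Hom C S A' \<Longrightarrow> cmp C v' (cmp C u' x) = zer C S D'"
  using assoc[OF _ mems(3) mems(4)] vu0' comp_zer_l obs by metis

lemma elts: "e0 \<in> Hom C S S" "e2 \<in> Hom C S S" "f1 \<in> Hom C S S" "f3 \<in> Hom C S S"
  "d0 \<in> Hom C S S" "d1 \<in> Hom C S S" "d2 \<in> Hom C S S"
  unfolding e0_def e2_def f1_def f3_def d0_def d1_def d2_def by (simp_all add: SIMPS)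

lemmas DEFS = e0_def e2_def f1_def f3_def d0_def d1_def d2_def ee_def

lemma idem: "cmp C e0 e0 = e0" "cmp C e2 e2 = e2" "cmp C f1 f1 = f1" "cmp C f3 f3 = f3"
  by (rule ext6S; simp add: SIMPS elts DEFS)+

lemma orth: "cmp C e0 e2 = zer C S S" "cmp C e0 f1 = zer C S S" "cmp C e0 f3 = zer C S S"
            "cmp C e2 e0 = zer C S S" "cmp C e2 f1 = zer C S S" "cmp C e2 f3 = zer C S S"
            "cmp C f1 e0 = zer C S S" "cmp C f1 e2 = zer C S S" "cmp C f1 f3 = zer C S S"
            "cmp C f3 e0 = zer C S S" "cmp C f3 e2 = zer C S S" "cmp C f3 f1 = zer C S S"
  by (rule ext6S; simp add: SIMPS elts DEFS)+

lemma supp: "cmp C d0 e0 = d0" "cmp C f1 d0 = d0" "cmp C d1 f1 = d1" "cmp C e2 d1 = d1" "cmp C d2 e2 = d2" "cmp C f3 d2 = d2"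
  by (rule ext6S; simp add: SIMPS elts DEFS)+

lemma cpx: "cmp C d1 d0 = zer C S S" "cmp C d2 d1 = zer C S S"
  by (rule ext6S; simp add: SIMPS elts DEFS bux vux cvx vux' add_neg)+


lemma p_ioS: "g \<in> Hom C S (ob l) \<Longrightarrow> cmp C (po k) (cmp C (io l) g) = (if k = l then g else zer C S (ob k))"
  by (rule p_io)
lemma ioc: "g \<in> Hom C S (ob l) \<Longrightarrow> cmp C (io l) g \<in> Hom C S S" using comp_hom ioH by blast
lemma addnegS: "x \<in> Hom C S Y \<Longrightarrow> y \<in> Hom C S Y \<Longrightarrow> madd C (madd C x y) (neg S Y y) = x"
  using add_assoc add_neg add_zer neg_hom by metis

lemmas SIMPS2 = SIMPS p_ioS ioc addnegS

lemma RR0: assumes m: "m \<in> Hom C S S" and em: "cmp C e0 m = m" and dm: "cmp C d0 m = zer C S S"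
  shows "m = zer C S S"
proof -
  have "cmp C (po lB) (cmp C d0 m) = zer C S B" "cmp C (po lA') (cmp C d0 m) = zer C S A'"
    using dm p_zerS by simp_all
  hence h: "cmp C u (cmp C (po lA) m) = zer C S B" "cmp C a (cmp C (po lA) m) = zer C S A'"
    using m by (simp_all add: SIMPS2 DEFS)
  have z: "cmp C (po lA) m = zer C S A" using E0[OF gc[OF MEMS(1) m] h] .
  have "cmp C e0 m = zer C S S" using m z by (rule_tac ext6S; simp add: SIMPS2 DEFS)
  thus ?thesis using em by simp
qed

lemma RR1: assumes x: "x \<in> Hom C S S" and fx: "cmp C f1 x = x" and dx: "cmp C d1 x = zer C S S"
  shows "\<exists>m \<in> Hom C S S. cmp C e0 m = m \<and> cmp C d0 m = x"
proof -
  have "cmp C (po lD) (cmp C d1 x) = zer C S D" "cmp C (po lB') (cmp C d1 x) = zer C S B'"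
    using dx p_zerS by simp_all
  hence h: "cmp C v (cmp C (po lB) x) = zer C S D"
     "madd C (cmp C b (cmp C (po lB) x)) (neg S B' (cmp C u' (cmp C (po lA') x))) = zer C S B'"
    using x by (simp_all add: SIMPS2 DEFS)
  have be: "cmp C (po lB) x \<in> Hom C S B" and al: "cmp C (po lA') x \<in> Hom C S A'" using x MEMS gc by blast+
  have h2: "cmp C b (cmp C (po lB) x) = cmp C u' (cmp C (po lA') x)"
    using sub_zero[OF gc[OF MEMS(18) be] gc[OF MEMS(15) al] h(2)] .
  obtain m0 where m0: "m0 \<in> Hom C S A" "cmp C u m0 = cmp C (po lB) x" "cmp C a m0 = cmp C (po lA') x"
    using E1[OF be al h(1) h2] by blast
  define m where "m = cmp C (io lA) m0"
  have mH: "m \<in> Hom C S S" unfolding m_def using m0 by (simp add: SIMPS2)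
  have "cmp C e0 m = m" unfolding m_def using m0 by (rule_tac ext6S; simp add: SIMPS2 DEFS)
  moreover have "cmp C d0 m = cmp C f1 x" unfolding m_def using m0 x by (rule_tac ext6S; simp add: SIMPS2 DEFS)
  ultimately show ?thesis using mH fx by auto
qed

lemma RR2: assumes y: "y \<in> Hom C S S" and ey: "cmp C e2 y = y" and dy: "cmp C d2 y = zer C S S"
  shows "\<exists>x \<in> Hom C S S. cmp C f1 x = x \<and> cmp C d1 x = y"
proof -
  have "cmp C (po lD') (cmp C d2 y) = zer C S D'" using dy p_zerS by simp
  hence h: "madd C (cmp C c (cmp C (po lD) y)) (neg S D' (cmp C v' (cmp C (po lB') y))) = zer C S D'"
    using y by (simp add: SIMPS2 DEFS)
  have g: "cmp C (po lD) y \<in> Hom C S D" and b': "cmp C (po lB') y \<in> Hom C S B'" using y MEMS gc by blast+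
  have h2: "cmp C c (cmp C (po lD) y) = cmp C v' (cmp C (po lB') y)"
    using sub_zero[OF gc[OF MEMS(19) g] gc[OF MEMS(16) b'] h] .
  obtain \<beta> \<alpha> where ba: "\<beta> \<in> Hom C S B" "\<alpha> \<in> Hom C S A'" "cmp C v \<beta> = cmp C (po lD) y"
    "cmp C b \<beta> = madd C (cmp C (po lB') y) (cmp C u' \<alpha>)"
    using E2[OF g b' h2] by blast
  define x where "x = madd C (cmp C (io lB) \<beta>) (cmp C (io lA') \<alpha>)"
  have xH: "x \<in> Hom C S S" unfolding x_def using ba by (simp add: SIMPS2)
  have "cmp C f1 x = x" unfolding x_def using ba by (rule_tac ext6S; simp add: SIMPS2 DEFS)
  moreover have "cmp C d1 x = cmp C e2 y" unfolding x_def using ba y by (rule_tac ext6S; simp add: SIMPS2 DEFS)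
  ultimately show ?thesis using xH ey by auto
qed

lemma RR3: assumes z: "z \<in> Hom C S S" and fz: "cmp C f3 z = z"
  shows "\<exists>y \<in> Hom C S S. cmp C e2 y = y \<and> cmp C d2 y = z"
proof -
  have g': "cmp C (po lD') z \<in> Hom C S D'" using z MEMS gc by blast
  obtain \<gamma> \<beta>' where gb: "\<gamma> \<in> Hom C S D" "\<beta>' \<in> Hom C S B'"
     "cmp C (po lD') z = madd C (cmp C c \<gamma>) (neg S D' (cmp C v' \<beta>'))"
    using E3[OF g'] by blast
  define y where "y = madd C (cmp C (io lD) \<gamma>) (cmp C (io lB') \<beta>')"
  have yH: "y \<in> Hom C S S" unfolding y_def using gb by (simp add: SIMPS2)
  have "cmp C e2 y = y" unfolding y_def using gb by (rule_tac ext6S; simp add: SIMPS2 DEFS)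
  moreover have "cmp C d2 y = cmp C f3 z" unfolding y_def using gb z by (rule_tac ext6S; simp add: SIMPS2 DEFS)
  ultimately show ?thesis using yH fz by auto
qed


lemma ctr_inst: "ctr (endR S) e0 e2 f1 f3 d0 d1 d2"
proof -
  interpret R: ring "endR S" using endR_ring[OF bSD(1)] .
  show ?thesis
  proof (intro ctr.intro ctr_axioms.intro)
    show "ring (endR S)" by (rule R.ring_axioms)
  qed (use elts idem orth supp cpx RR0 RR1 RR2 RR3 in \<open>simp_all add: endR_def\<close>)
qed

lemma pk_iPpP: "cmp C (po k) (cmp C iP pP) = (if fst k then po k else zer C S (ob k))"
proof (cases k)
  case (Pair bb i)
  show ?thesis
  proof (cases bb)
    case True
    have "cmp C (po k) (cmp C iP pP) = cmp C (prP i) (cmp C (cmp C pP iP) pP)"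
      using Pair True assoc[OF comp_hom[OF bSD(4) bSD(2)] bSD(4) prPH] assoc[OF bSD(4) bSD(2) bSD(4)]
      by (simp add: po_def)
    also have "\<dots> = po k" using Pair True bSD(6) id_l[OF bSD(4)] by (simp add: po_def)
    finally show ?thesis using True Pair by simp
  next
    case False
    have "cmp C (po k) (cmp C iP pP) = cmp C (prQ i) (cmp C (cmp C pQ iP) pP)"
      using Pair False assoc[OF comp_hom[OF bSD(4) bSD(2)] bSD(5) prQH] assoc[OF bSD(4) bSD(2) bSD(5)]
      by (simp add: po_def)
    also have "\<dots> = zer C S (oQ i)" using bSD(9) comp_zer_l[OF bSD(4) PQO(2)] comp_zer_r[OF prQH bSD(1)] by simp
    finally show ?thesis using False Pair by (simp add: ob_def)
  qed
qed

lemma pk_iQpQ: "cmp C (po k) (cmp C iQ pQ) = (if fst k then zer C S (ob k) else po k)"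
proof (cases k)
  case (Pair bb i)
  show ?thesis
  proof (cases bb)
    case False
    have "cmp C (po k) (cmp C iQ pQ) = cmp C (prQ i) (cmp C (cmp C pQ iQ) pQ)"
      using Pair False assoc[OF comp_hom[OF bSD(5) bSD(3)] bSD(5) prQH] assoc[OF bSD(5) bSD(3) bSD(5)]
      by (simp add: po_def)
    also have "\<dots> = po k" using Pair False bSD(7) id_l[OF bSD(5)] by (simp add: po_def)
    finally show ?thesis using False Pair by simp
  next
    case True
    have "cmp C (po k) (cmp C iQ pQ) = cmp C (prP i) (cmp C (cmp C pP iQ) pQ)"
      using Pair True assoc[OF comp_hom[OF bSD(5) bSD(3)] bSD(4) prPH] assoc[OF bSD(5) bSD(3) bSD(4)]
      by (simp add: po_def)
    also have "\<dots> = zer C S (oP i)" using bSD(8) comp_zer_l[OF bSD(5) PQO(1)] comp_zer_r[OF prPH bSD(1)] by simp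
    finally show ?thesis using True Pair by (simp add: ob_def)
  qed
qed

lemma eP_eq: "cmp C iP pP = madd C e0 e2"
  by (rule ext6S) (simp_all add: SIMPS2 DEFS pk_iPpP comp_hom[OF bSD(4) bSD(2)])
lemma fQ_eq: "cmp C iQ pQ = madd C f1 f3"
  by (rule ext6S) (simp_all add: SIMPS2 DEFS pk_iQpQ comp_hom[OF bSD(5) bSD(3)])

lemma iso_PQ: "isomorphic C P Q"
proof -
  interpret K: ctr "endR S" e0 e2 f1 f3 d0 d1 d2 by (rule ctr_inst)
  obtain \<Phi> \<Psi> where PP: "\<Phi> \<in> Hom C S S" "\<Psi> \<in> Hom C S S"
    "cmp C \<Psi> \<Phi> = cmp C iP pP" "cmp C \<Phi> \<Psi> = cmp C iQ pQ"
    "cmp C (cmp C iQ pQ) \<Phi> = \<Phi>" "cmp C \<Phi> (cmp C iP pP) = \<Phi>"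
    "cmp C (cmp C iP pP) \<Psi> = \<Psi>" "cmp C \<Psi> (cmp C iQ pQ) = \<Psi>"
    using K.main unfolding eP_eq fQ_eq by (auto simp: endR_def)
  have iPpP: "cmp C iP pP \<in> Hom C S S" and iQpQ: "cmp C iQ pQ \<in> Hom C S S" using comp_hom bSD by blast+
  define F where "F = cmp C pQ (cmp C \<Phi> iP)"
  define G where "G = cmp C pP (cmp C \<Psi> iQ)"
  have PiP: "cmp C \<Phi> iP \<in> Hom C P S" using comp_hom[OF bSD(2) PP(1)] .
  have PsiQ: "cmp C \<Psi> iQ \<in> Hom C Q S" using comp_hom[OF bSD(3) PP(2)] .
  have FH: "F \<in> Hom C P Q" unfolding F_def using comp_hom[OF PiP bSD(5)] .
  have GH: "G \<in> Hom C Q P" unfolding G_def using comp_hom[OF PsiQ bSD(4)] .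
  have e1: "cmp C iQ F = cmp C \<Phi> iP"
  proof -
    have "cmp C iQ F = cmp C (cmp C iQ pQ) (cmp C \<Phi> iP)" unfolding F_def using assoc[OF PiP bSD(5) bSD(3)] by simp
    also have "\<dots> = cmp C (cmp C (cmp C iQ pQ) \<Phi>) iP" using assoc[OF bSD(2) PP(1) iQpQ] by simp
    finally show ?thesis using PP(5) by simp
  qed
  have e2: "cmp C iP G = cmp C \<Psi> iQ"
  proof -
    have "cmp C iP G = cmp C (cmp C iP pP) (cmp C \<Psi> iQ)" unfolding G_def using assoc[OF PsiQ bSD(4) bSD(2)] by simp
    also have "\<dots> = cmp C (cmp C (cmp C iP pP) \<Psi>) iQ" using assoc[OF bSD(3) PP(2) iPpP] by simp
    finally show ?thesis using PP(7) by simp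
  qed
  have "cmp C G F = cmp C pP (cmp C (cmp C \<Psi> iQ) F)" unfolding G_def using assoc[OF FH PsiQ bSD(4)] by simp
  also have "\<dots> = cmp C pP (cmp C \<Psi> (cmp C \<Phi> iP))" using assoc[OF FH bSD(3) PP(2)] e1 by simp
  also have "\<dots> = cmp C pP (cmp C (cmp C iP pP) iP)" using assoc[OF bSD(2) PP(1) PP(2)] PP(3) by simp
  also have "\<dots> = cmp C pP iP" using assoc[OF bSD(2) bSD(4) bSD(2)] bSD(6) id_r[OF bSD(2)] by simp
  finally have GF: "cmp C G F = idm C P" using bSD(6) by simp
  have "cmp C F G = cmp C pQ (cmp C (cmp C \<Phi> iP) G)" unfolding F_def using assoc[OF GH PiP bSD(5)] by simp
  also have "\<dots> = cmp C pQ (cmp C \<Phi> (cmp C \<Psi> iQ))" using assoc[OF GH bSD(2) PP(1)] e2 by simp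
  also have "\<dots> = cmp C pQ (cmp C (cmp C iQ pQ) iQ)" using assoc[OF bSD(3) PP(2) PP(1)] PP(4) by simp
  also have "\<dots> = cmp C pQ iQ" using assoc[OF bSD(3) bSD(5) bSD(3)] bSD(7) id_r[OF bSD(3)] by simp
  finally have FG: "cmp C F G = idm C Q" using bSD(7) by simp
  show ?thesis unfolding isomorphic_def iso_mor_def using FH GH GF FG by blast
qed

end




theorem lemmaA1:
  fixes C :: "('o, 'm) tcat"
    and FO :: "'o \<Rightarrow> 'x monoid" and FM :: "'m \<Rightarrow> 'x \<Rightarrow> 'x"
    and \<pi> \<pi>' :: "'o \<Rightarrow> 'm \<Rightarrow> 'x"
  assumes "triangulated C"
    and "(A, B, D, u, v, w) \<in> tri C"
    and "(A', B', D', u', v', w') \<in> tri C"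
    and "presents C (A, B, D, u, v, w) FO FM \<pi>"
    and "presents C (A', B', D', u', v', w') FO FM \<pi>'"
  shows "\<forall>P Q. is_biproduct3 C A B' D P \<longrightarrow> is_biproduct3 C A' B D' Q \<longrightarrow> isomorphic C P Q"
proof (intro allI impI)
  fix P Q assume bP: "is_biproduct3 C A B' D P" and bQ: "is_biproduct3 C A' B D' Q"
  interpret TC C by (unfold_locales) (rule assms(1))
  note T = assms(2) and T' = assms(3) and Pr = assms(4) and Pr' = assms(5)
  obtain c where c: "c \<in> Hom C D D'" "\<forall>X \<gamma>. \<gamma> \<in> Hom C X D \<longrightarrow> \<pi>' X (cmp C c \<gamma>) = \<pi> X \<gamma>"
    using c_exists[OF Pr Pr' T T'] by blast
  obtain c' where c': "c' \<in> Hom C D' D" "\<forall>X \<gamma>. \<gamma> \<in> Hom C X D' \<longrightarrow> \<pi> X (cmp C c' \<gamma>) = \<pi>' X \<gamma>"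
    using c_exists[OF Pr' Pr T' T] by blast
  obtain b where b: "b \<in> Hom C B B'" "cmp C c v = cmp C v' b" using b_exists[OF Pr Pr' T T' c] by blast
  obtain b' where b': "b' \<in> Hom C B' B" "cmp C c' v' = cmp C v b'" using b_exists[OF Pr' Pr T' T c'] by blast
  obtain h where h: "h \<in> Hom C D B" "idm C D = madd C (cmp C c' c) (cmp C v h)"
    using h_exists[OF Pr Pr' T T' c c'] by blast
  obtain h' where h': "h' \<in> Hom C D' B'" "idm C D' = madd C (cmp C c c') (cmp C v' h')"
    using h_exists[OF Pr' Pr T' T c' c] by blast
  obtain a where a: "a \<in> Hom C A A'" "cmp C b u = cmp C u' a" "cmp C (shM C a) w = cmp C w' c"
    using a_exists[OF T T' b(1) c(1) b(2)] by blast
  have PO: "P \<in> Ob C" and QO: "Q \<in> Ob C" using bP bQ unfolding is_biproduct3_def by blast+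
  obtain S iP iQ pP pQ where bS: "biproduct C P Q S iP iQ pP pQ"
    using addC PO QO unfolding additive_def by blast
  obtain i1 i2 i3 p1 p2 p3 where bp: "i1 \<in> Hom C A P" "i2 \<in> Hom C B' P" "i3 \<in> Hom C D P"
        "p1 \<in> Hom C P A" "p2 \<in> Hom C P B'" "p3 \<in> Hom C P D"
        "cmp C p1 i1 = idm C A" "cmp C p2 i2 = idm C B'" "cmp C p3 i3 = idm C D"
        "cmp C p1 i2 = zer C B' A" "cmp C p1 i3 = zer C D A"
        "cmp C p2 i1 = zer C A B'" "cmp C p2 i3 = zer C D B'"
        "cmp C p3 i1 = zer C A D" "cmp C p3 i2 = zer C B' D"
        "madd C (madd C (cmp C i1 p1) (cmp C i2 p2)) (cmp C i3 p3) = idm C P"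
    using bP unfolding is_biproduct3_def by blast
  obtain j1 j2 j3 q1 q2 q3 where bq: "j1 \<in> Hom C A' Q" "j2 \<in> Hom C B Q" "j3 \<in> Hom C D' Q"
        "q1 \<in> Hom C Q A'" "q2 \<in> Hom C Q B" "q3 \<in> Hom C Q D'"
        "cmp C q1 j1 = idm C A'" "cmp C q2 j2 = idm C B" "cmp C q3 j3 = idm C D'"
        "cmp C q1 j2 = zer C B A'" "cmp C q1 j3 = zer C D' A'"
        "cmp C q2 j1 = zer C A' B" "cmp C q2 j3 = zer C D' B"
        "cmp C q3 j1 = zer C A' D'" "cmp C q3 j2 = zer C B D'"
        "madd C (madd C (cmp C j1 q1) (cmp C j2 q2)) (cmp C j3 q3) = idm C Q"
    using bQ unfolding is_biproduct3_def by blast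
  define oP where "oP = (\<lambda>i. case i of I1 \<Rightarrow> A | I2 \<Rightarrow> B' | I3 \<Rightarrow> D)"
  define oQ where "oQ = (\<lambda>i. case i of I1 \<Rightarrow> A' | I2 \<Rightarrow> B | I3 \<Rightarrow> D')"
  define inP where "inP = (\<lambda>i. case i of I1 \<Rightarrow> i1 | I2 \<Rightarrow> i2 | I3 \<Rightarrow> i3)"
  define prP where "prP = (\<lambda>i. case i of I1 \<Rightarrow> p1 | I2 \<Rightarrow> p2 | I3 \<Rightarrow> p3)"
  define inQ where "inQ = (\<lambda>i. case i of I1 \<Rightarrow> j1 | I2 \<Rightarrow> j2 | I3 \<Rightarrow> j3)"
  define prQ where "prQ = (\<lambda>i. case i of I1 \<Rightarrow> q1 | I2 \<Rightarrow> q2 | I3 \<Rightarrow> q3)"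
  interpret G: GLUE C A B D u v w A' B' D' u' v' w' a b c b' c' h h' FO FM \<pi> \<pi>' P Q S iP iQ pP pQ oP oQ inP prP inQ prQ
  proof (unfold_locales)
    show "\<And>i. inP i \<in> Hom C (oP i) P" unfolding inP_def oP_def using bp by (simp split: ix.split)
    show "\<And>i. prP i \<in> Hom C P (oP i)" unfolding prP_def oP_def using bp by (simp split: ix.split)
    show "\<And>i. inQ i \<in> Hom C (oQ i) Q" unfolding inQ_def oQ_def using bq by (simp split: ix.split)
    show "\<And>i. prQ i \<in> Hom C Q (oQ i)" unfolding prQ_def oQ_def using bq by (simp split: ix.split)
    show "\<And>i j. cmp C (prP i) (inP j) = (if i = j then idm C (oP i) else zer C (oP j) (oP i))"
      unfolding inP_def prP_def oP_def using bp by (simp split: ix.split)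
    show "\<And>i j. cmp C (prQ i) (inQ j) = (if i = j then idm C (oQ i) else zer C (oQ j) (oQ i))"
      unfolding inQ_def prQ_def oQ_def using bq by (simp split: ix.split)
  qed (use T T' Pr Pr' a b c b' c' h h' bS bp bq in \<open>simp_all add: oP_def oQ_def inP_def prP_def inQ_def prQ_def\<close>)
  show "isomorphic C P Q" by (rule G.iso_PQ)
qed


end
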